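(* Let $k$ be a field, let $V_\bullet$ be a complex of finite dimensional $k$-vector spaces, indexed cohomologically (differential $d_i:V_i\to V_{i+1}$, $i\in\mathbb{Z}$), and let $\phi_\bullet:V_\bullet\to V_\bullet$ be a chain map, with induced maps $\phi_i^H$ on $H^i(V_\bullet)$. Call a finite interval $S=[M,N]\subset\mathbb{Z}$ a stretch if it is maximal (among finite intervals) with respect to the property that $d_i\neq 0$ whenever $i,i+1\in S$. For a stretch $S$ put $\operatorname{tr}_S(\phi_\bullet)=\sum_{i\in S}(-1)^i\operatorname{tr}(\phi_i)$ and $\operatorname{tr}^H_S(\phi_\bullet)=\sum_{i\in S}(-1)^i\operatorname{tr}(\phi_i^H)$. Then the following are equivalent: (a) $\phi_\bullet$ is chain homotopic to a pointwise commutator, i.e. to a chain map $\psi_\bullet$ such that each $\psi_i$ is a commutator in the endomorphism ring of the vector space $V_i$; (b) $\operatorname{tr}_S(\phi_\bullet)=0$ for every stretch $S$; (c) $\operatorname{tr}^H_S(\phi_\bullet)=0$ for every stretch $S$.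
   Context: $\operatorname{tr}$ denotes the trace of an endomorphism of a finite dimensional vector space. A complex may have no stretches, in which case (b) and (c) hold vacuously. *)

theory Defs
  imports "Jordan_Normal_Form.Matrix"
begin

text \<open>A finite dimensional k-vector space V_i is represented as k^(n i);
  linear maps are matrices (Jordan_Normal_Form.Matrix).\<close>

definition mat_trace :: "'k::comm_ring_1 mat \<Rightarrow> 'k" where
  "mat_trace A = (\<Sum>i<dim_row A. A $$ (i, i))"

definition is_complex :: "(int \<Rightarrow> nat) \<Rightarrow> (int \<Rightarrow> 'k::field mat) \<Rightarrow> bool" where
  "is_complex n d \<longleftrightarrow>
     (\<forall>i. d i \<in> carrier_mat (n (i + 1)) (n i)) \<and>
     (\<forall>i. d (i + 1) * d i = 0\<^sub>m (n (i + 2)) (n i))"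

definition is_chain_map :: "(int \<Rightarrow> nat) \<Rightarrow> (int \<Rightarrow> 'k::field mat) \<Rightarrow> (int \<Rightarrow> 'k mat) \<Rightarrow> bool" where
  "is_chain_map n d f \<longleftrightarrow>
     (\<forall>i. f i \<in> carrier_mat (n i) (n i)) \<and>
     (\<forall>i. f (i + 1) * d i = d i * f i)"

definition chain_homotopic :: "(int \<Rightarrow> nat) \<Rightarrow> (int \<Rightarrow> 'k::field mat) \<Rightarrow> (int \<Rightarrow> 'k mat) \<Rightarrow> (int \<Rightarrow> 'k mat) \<Rightarrow> bool" where
  "chain_homotopic n d f g \<longleftrightarrow>
     (\<exists>h. (\<forall>i. h i \<in> carrier_mat (n (i - 1)) (n i)) \<and>
          (\<forall>i. f i - g i = d (i - 1) * h i + h (i + 1) * d i))"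

definition is_commutator :: "nat \<Rightarrow> 'k::field mat \<Rightarrow> bool" where
  "is_commutator m A \<longleftrightarrow>
     (\<exists>B C. B \<in> carrier_mat m m \<and> C \<in> carrier_mat m m \<and> A = B * C - C * B)"

definition pointwise_commutator :: "(int \<Rightarrow> nat) \<Rightarrow> (int \<Rightarrow> 'k::field mat) \<Rightarrow> bool" where
  "pointwise_commutator n g \<longleftrightarrow> (\<forall>i. is_commutator (n i) (g i))"

definition nonzero_on :: "(int \<Rightarrow> nat) \<Rightarrow> (int \<Rightarrow> 'k::field mat) \<Rightarrow> int set \<Rightarrow> bool" where
  "nonzero_on n d S \<longleftrightarrow> (\<forall>i. i \<in> S \<and> i + 1 \<in> S \<longrightarrow> d i \<noteq> 0\<^sub>m (n (i + 1)) (n i))"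

definition is_stretch :: "(int \<Rightarrow> nat) \<Rightarrow> (int \<Rightarrow> 'k::field mat) \<Rightarrow> int \<Rightarrow> int \<Rightarrow> bool" where
  "is_stretch n d M N \<longleftrightarrow>
     M \<le> N \<and> nonzero_on n d {M..N} \<and>
     (\<forall>M' N'. M' \<le> N' \<and> {M..N} \<subseteq> {M'..N'} \<and> nonzero_on n d {M'..N'} \<longrightarrow> {M'..N'} = {M..N})"

definition cocycles :: "(int \<Rightarrow> nat) \<Rightarrow> (int \<Rightarrow> 'k::field mat) \<Rightarrow> int \<Rightarrow> 'k vec set" where
  "cocycles n d i = {v \<in> carrier_vec (n i). d i *\<^sub>v v = 0\<^sub>v (n (i + 1))}"

definition coboundaries :: "(int \<Rightarrow> nat) \<Rightarrow> (int \<Rightarrow> 'k::field mat) \<Rightarrow> int \<Rightarrow> 'k vec set" where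
  "coboundaries n d i = {d (i - 1) *\<^sub>v w | w. w \<in> carrier_vec (n (i - 1))}"

text \<open>Trace of the endomorphism of the quotient W/U (U \<subseteq> W \<subseteq> k^m subspaces, A W \<subseteq> W,
  A U \<subseteq> U) induced by the m\<times>m matrix A: the columns of B (an m\<times>r matrix) project to a basis
  of W/U, C is the matrix of the induced map in that basis, and the value is tr C.\<close>
definition quot_trace :: "nat \<Rightarrow> 'k::field mat \<Rightarrow> 'k vec set \<Rightarrow> 'k vec set \<Rightarrow> 'k" where
  "quot_trace m A W U = (THE t. \<exists>r B C.
      B \<in> carrier_mat m r \<and> C \<in> carrier_mat r r \<and>
      (\<forall>a \<in> carrier_vec r. B *\<^sub>v a \<in> W) \<and>
      (\<forall>w \<in> W. \<exists>a \<in> carrier_vec r. w - B *\<^sub>v a \<in> U) \<and>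
      (\<forall>a \<in> carrier_vec r. B *\<^sub>v a \<in> U \<longrightarrow> a = 0\<^sub>v r) \<and>
      (\<forall>a \<in> carrier_vec r. A *\<^sub>v (B *\<^sub>v a) - B *\<^sub>v (C *\<^sub>v a) \<in> U) \<and>
      t = mat_trace C)"

definition homology_trace :: "(int \<Rightarrow> nat) \<Rightarrow> (int \<Rightarrow> 'k::field mat) \<Rightarrow> (int \<Rightarrow> 'k mat) \<Rightarrow> int \<Rightarrow> 'k" where
  "homology_trace n d f i = quot_trace (n i) (f i) (cocycles n d i) (coboundaries n d i)"

end

theory Submission
  imports Defs "Jordan_Normal_Form.Determinant"
begin


definition ext :: "nat \<Rightarrow> 'a::zero mat \<Rightarrow> int \<Rightarrow> int \<Rightarrow> 'a" where
  "ext n A i j = (if 0 \<le> i \<and> i < int n \<and> 0 \<le> j \<and> j < int n then A $$ (nat i, nat j) else 0)"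

definition Gf :: "nat \<Rightarrow> 'a::comm_ring_1 mat \<Rightarrow> int \<Rightarrow> int \<Rightarrow> 'a" where
  "Gf n A p q = (\<Sum>s\<in>{1..n}. ext n A (p - int s) (q - int s + 1))"

definition shiftM :: "nat \<Rightarrow> 'a::comm_ring_1 mat" where
  "shiftM n = mat n n (\<lambda>(i,j). if j = Suc i then 1 else 0)"

definition Ytr :: "nat \<Rightarrow> 'a::comm_ring_1 mat \<Rightarrow> 'a mat" where
  "Ytr n A = mat n n (\<lambda>(p,q). Gf n A (int p) (int q))"

lemma G_step:
  assumes "i \<le> int n - 1"
  shows "Gf n A (i+1) j - Gf n A i (j-1) = ext n A i j"
proof -
  let ?f = "\<lambda>s::nat. ext n A (i + 1 - int s) (j + 1 - int s)"
  have 1: "Gf n A (i+1) j = (\<Sum>s\<in>{1..n}. ?f s)"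
    unfolding Gf_def by (rule sum.cong) (auto simp: algebra_simps)
  have 2: "Gf n A i (j-1) = (\<Sum>s\<in>{1..n}. ?f (Suc s))"
    unfolding Gf_def by (rule sum.cong) (auto simp: algebra_simps)
  have h: "(\<Sum>s\<in>{1..n}. ?f (Suc s)) - (\<Sum>s\<in>{1..n}. ?f s) = ?f (Suc n) - ?f 1"
    using sum_Suc_diff[of 1 n ?f] by (simp add: sum_subtractf)
  hence "(\<Sum>s\<in>{1..n}. ?f s) - (\<Sum>s\<in>{1..n}. ?f (Suc s)) = ?f 1 - ?f (Suc n)"
    by (subst minus_diff_eq[symmetric], subst h, simp)
  moreover have "?f (Suc n) = 0" using assms unfolding ext_def by auto
  moreover have "?f 1 = ext n A i j" by simp
  ultimately show ?thesis using 1 2 by simp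
qed

lemma G_top:
  assumes hyp: "\<forall>c\<le>0. (\<Sum>t<n. ext n A (int t) (int t + c)) = 0" and j: "j < n"
  shows "Gf n A (int n) (int j) = 0"
proof -
  have "Gf n A (int n) (int j) = (\<Sum>t<n. ext n A (int (n - Suc t)) (int (n - Suc t) + (int j + 1 - int n)))"
  proof -
    have "Gf n A (int n) (int j) = (\<Sum>s<n. ext n A (int n - int (Suc s)) (int j - int (Suc s) + 1))"
      unfolding Gf_def by (rule sum.reindex_bij_witness[of _ Suc "\<lambda>s. s - 1"]) auto
    also have "\<dots> = (\<Sum>t<n. ext n A (int (n - Suc t)) (int (n - Suc t) + (int j + 1 - int n)))"
    proof (rule sum.cong[OF refl])
      fix t assume t: "t \<in> {..<n}"
      have e1: "int (n - Suc t) = int n - int (Suc t)" using t by (simp add: of_nat_diff)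
      show "ext n A (int n - int (Suc t)) (int j - int (Suc t) + 1) =
        ext n A (int (n - Suc t)) (int (n - Suc t) + (int j + 1 - int n))"
        unfolding e1 by (rule arg_cong2[where f="ext n A"]) simp_all
    qed
    finally show ?thesis .
  qed
  also have "\<dots> = (\<Sum>t<n. ext n A (int t) (int t + (int j + 1 - int n)))"
    by (rule sum.nat_diff_reindex)
  also have "\<dots> = 0" using hyp[rule_format, of "int j + 1 - int n"] j by simp
  finally show ?thesis .
qed

lemma G_left: "Gf n A i (-1) = 0"
  unfolding Gf_def ext_def by (rule sum.neutral) auto

lemma N_trick:
  fixes A :: "'a::comm_ring_1 mat"
  assumes A: "A \<in> carrier_mat n n"
    and hyp: "\<forall>c\<le>0. (\<Sum>t<n. ext n A (int t) (int t + c)) = 0"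
  shows "A = shiftM n * Ytr n A - Ytr n A * shiftM n"
proof (rule eq_matI)
  fix i j assume i: "i < dim_row (shiftM n * Ytr n A - Ytr n A * shiftM n)"
    and j: "j < dim_col (shiftM n * Ytr n A - Ytr n A * shiftM n)"
  hence i: "i < n" and j: "j < n" by (auto simp: shiftM_def Ytr_def)
  have l: "(shiftM n * Ytr n A) $$ (i,j) = Gf n A (int i + 1) (int j)"
  proof -
    have "(shiftM n * Ytr n A) $$ (i,j) = (\<Sum>k<n. (if k = Suc i then 1 else 0) * Gf n A (int k) (int j))"
      using i j unfolding shiftM_def Ytr_def by (simp add: scalar_prod_def atLeast0LessThan)
    also have "\<dots> = (\<Sum>k<n. (if k = Suc i then Gf n A (int k) (int j) else 0))"
      by (rule sum.cong) auto
    also have "\<dots> = (if Suc i < n then Gf n A (int (Suc i)) (int j) else 0)"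
      by (simp add: sum.delta')
    also have "\<dots> = Gf n A (int i + 1) (int j)"
    proof (cases "Suc i < n")
      case False hence "Suc i = n" using i by auto
      hence "int i + 1 = int n" by simp
      thus ?thesis using G_top[OF hyp j] by simp
    next
      case True
      have "int (Suc i) = int i + 1" by simp
      then show ?thesis using True by presburger
    qed
    finally show ?thesis .
  qed
  have r: "(Ytr n A * shiftM n) $$ (i,j) = Gf n A (int i) (int j - 1)"
  proof -
    have "(Ytr n A * shiftM n) $$ (i,j) = (\<Sum>k<n. Gf n A (int i) (int k) * (if j = Suc k then 1 else 0))"
      using i j unfolding shiftM_def Ytr_def by (simp add: scalar_prod_def atLeast0LessThan)
    also have "\<dots> = (if j \<ge> 1 then Gf n A (int i) (int (j - 1)) else 0)"
    proof (cases j)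
      case 0 thus ?thesis by simp
    next
      case (Suc j') 
      have "(\<Sum>k<n. Gf n A (int i) (int k) * (if j = Suc k then 1 else 0)) = 
           (\<Sum>k<n. (if k = j' then Gf n A (int i) (int k) else 0))"
        by (rule sum.cong) (auto simp: Suc)
      also have "\<dots> = Gf n A (int i) (int j')" using j Suc by (simp add: sum.delta')
      finally show ?thesis using Suc by simp
    qed
    also have "\<dots> = Gf n A (int i) (int j - 1)"
      using G_left[of n A "int i"] by (cases j) auto
    finally show ?thesis .
  qed
  have "A $$ (i,j) = ext n A (int i) (int j)" using i j by (simp add: ext_def)
  also have "\<dots> = Gf n A (int i + 1) (int j) - Gf n A (int i) (int j - 1)"
    using G_step[of "int i" n A "int j"] i by simp
  finally show "A $$ (i,j) = (shiftM n * Ytr n A - Ytr n A * shiftM n) $$ (i,j)"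
    using l r i j by (simp add: shiftM_def Ytr_def)
next
  show "dim_row A = dim_row (shiftM n * Ytr n A - Ytr n A * shiftM n)"
    "dim_col A = dim_col (shiftM n * Ytr n A - Ytr n A * shiftM n)" using A by (auto simp: shiftM_def Ytr_def)
qed


lemma minus_four_block_mat: assumes
  c1: "A1 \<in> carrier_mat nr1 nc1" "B1 \<in> carrier_mat nr1 nc2" "C1 \<in> carrier_mat nr2 nc1" "D1 \<in> carrier_mat nr2 nc2" and
  c2: "A2 \<in> carrier_mat nr1 nc1" "B2 \<in> carrier_mat nr1 nc2" "C2 \<in> carrier_mat nr2 nc1" "D2 \<in> carrier_mat nr2 nc2"
  shows "four_block_mat A1 B1 C1 D1 - four_block_mat A2 B2 C2 D2
  = four_block_mat (A1 - A2) (B1 - B2) (C1 - C2) (D1 - D2)"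
  by (rule eq_matI, insert assms, auto)

lemma shiftM_carrier[simp]: "shiftM m \<in> carrier_mat m m" by (simp add: shiftM_def)
lemma Ytr_carrier[simp]: "Ytr m A \<in> carrier_mat m m" by (simp add: Ytr_def)

lemma split_trick:
  fixes A :: "'a::comm_ring_1 mat"
  assumes A: "A \<in> carrier_mat (Suc m) (Suc m)" and a00: "A $$ (0,0) = 0"
    and hyp: "\<forall>c\<le>0. (\<Sum>t<m. ext m (mat m m (\<lambda>(i,j). A $$ (Suc i, Suc j))) (int t) (int t + c)) = 0"
  shows "\<exists>X Y. X \<in> carrier_mat (Suc m) (Suc m) \<and> Y \<in> carrier_mat (Suc m) (Suc m) \<and> A = X * Y - Y * X"
proof -
  obtain A1 A2 A3 A4 where sb: "split_block A 1 1 = (A1,A2,A3,A4)" by (cases "split_block A 1 1") auto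
  note spl = split_block[OF sb, of m m]
  have c: "A1 \<in> carrier_mat 1 1" "A2 \<in> carrier_mat 1 m" "A3 \<in> carrier_mat m 1" "A4 \<in> carrier_mat m m"
    and Aeq: "A = four_block_mat A1 A2 A3 A4" using spl A by auto
  have A1: "A1 = 0\<^sub>m 1 1" using sb a00 A unfolding split_block_def Let_def by (auto intro!: eq_matI)
  have A4: "A4 = mat m m (\<lambda>(i,j). A $$ (Suc i, Suc j))" using sb A unfolding split_block_def Let_def by auto
  have A2: "\<And>j. j < m \<Longrightarrow> A2 $$ (0,j) = A $$ (0, Suc j)" using sb A unfolding split_block_def Let_def by auto
  have A3: "\<And>i. i < m \<Longrightarrow> A3 $$ (i,0) = A $$ (Suc i, 0)" using sb A unfolding split_block_def Let_def by auto
  define M where "M = (shiftM m :: 'a mat)"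
  define YW where "YW = Ytr m A4"
  have N: "A4 = M * YW - YW * M" unfolding M_def YW_def
    by (rule N_trick[OF c(4)]) (use hyp A4 in simp)
  define y where "y = mat 1 m (\<lambda>(_,j). \<Sum>t\<le>j. A2 $$ (0,t))"
  define z where "z = mat m 1 (\<lambda>(i,_). - (\<Sum>t\<in>{i..<m}. A3 $$ (t,0)))"
  have yc: "y \<in> carrier_mat 1 m" and zc: "z \<in> carrier_mat m 1" and Mc: "M \<in> carrier_mat m m"
    and YWc: "YW \<in> carrier_mat m m" by (auto simp: y_def z_def M_def YW_def)
  have yM: "y - y * M = A2"
  proof (rule eq_matI)
    fix i j assume "i < dim_row A2" "j < dim_col A2"
    hence i: "i = 0" and j: "j < m" using c by auto
    have "(y * M) $$ (0,j) = (\<Sum>k<m. y $$ (0,k) * (if j = Suc k then 1 else 0))"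
      using j unfolding M_def shiftM_def y_def by (simp add: scalar_prod_def atLeast0LessThan)
    also have "\<dots> = (if j = 0 then 0 else y $$ (0, j - 1))"
    proof (cases j)
      case (Suc j')
      have "(\<Sum>k<m. y $$ (0,k) * (if j = Suc k then 1 else 0)) = (\<Sum>k<m. if k = j' then y $$ (0,k) else 0)"
        by (rule sum.cong) (auto simp: Suc)
      also have "\<dots> = y $$ (0,j')" using j Suc by (simp add: sum.delta')
      finally show ?thesis using Suc by simp
    qed simp
    finally have "(y * M) $$ (0,j) = (if j = 0 then 0 else y $$ (0, j - 1))" .
    moreover have "y $$ (0,j) = (\<Sum>t\<le>j. A2 $$ (0,t))" using j by (simp add: y_def)
    moreover have "j \<noteq> 0 \<Longrightarrow> y $$ (0,j-1) = (\<Sum>t\<le>j-1. A2 $$ (0,t))" using j by (simp add: y_def)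
    moreover have "j \<noteq> 0 \<Longrightarrow> (\<Sum>t\<le>j. A2 $$ (0,t)) = (\<Sum>t\<le>j-1. A2 $$ (0,t)) + A2 $$ (0,j)"
      by (cases j) (auto simp: sum.atMost_Suc)
    ultimately show "(y - y * M) $$ (i,j) = A2 $$ (i,j)" using i j yc Mc by auto
  qed (use c yc Mc in auto)
  have Mz: "M * z - z = A3"
  proof (rule eq_matI)
    fix i j assume "i < dim_row A3" "j < dim_col A3"
    hence j: "j = 0" and i: "i < m" using c by auto
    have "(M * z) $$ (i,0) = (\<Sum>k<m. (if k = Suc i then 1 else 0) * z $$ (k,0))"
      using i unfolding M_def shiftM_def z_def by (simp add: scalar_prod_def atLeast0LessThan)
    also have "\<dots> = (\<Sum>k<m. if k = Suc i then z $$ (k,0) else 0)" by (rule sum.cong) auto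
    also have "\<dots> = (if Suc i < m then z $$ (Suc i, 0) else 0)" by (simp add: sum.delta')
    also have "\<dots> = - (\<Sum>t\<in>{Suc i..<m}. A3 $$ (t,0))" by (auto simp: z_def)
    finally have 1: "(M * z) $$ (i,0) = - (\<Sum>t\<in>{Suc i..<m}. A3 $$ (t,0))" .
    have 2: "(\<Sum>t\<in>{i..<m}. A3 $$ (t,0)) = A3 $$ (i,0) + (\<Sum>t\<in>{Suc i..<m}. A3 $$ (t,0))"
      using i by (simp add: sum.atLeast_Suc_lessThan)
    show "(M * z - z) $$ (i,j) = A3 $$ (i,j)" using 1 2 i j zc Mc by (simp add: z_def)
  qed (use c zc Mc in auto)
  define X where "X = four_block_mat (1\<^sub>m 1) (0\<^sub>m 1 m) (0\<^sub>m m 1) M"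
  define Y where "Y = four_block_mat (0\<^sub>m 1 1) y z YW"
  have XY: "X * Y = four_block_mat (0\<^sub>m 1 1) y (M * z) (M * YW)"
    unfolding X_def Y_def using yc zc Mc YWc by (subst mult_four_block_mat[of _ 1 1 _ m _ m], auto)
  have YX: "Y * X = four_block_mat (0\<^sub>m 1 1) (y * M) z (YW * M)"
    unfolding X_def Y_def using yc zc Mc YWc by (subst mult_four_block_mat[of _ 1 1 _ m _ m], auto)
  have "X * Y - Y * X = four_block_mat (0\<^sub>m 1 1 - 0\<^sub>m 1 1) (y - y * M) (M * z - z) (M * YW - YW * M)"
    unfolding XY YX using yc zc Mc YWc by (subst minus_four_block_mat[of _ 1 1 _ m _ m], auto)
  also have "\<dots> = A"
  proof -
    have "0\<^sub>m (Suc 0) (Suc 0) - 0\<^sub>m (Suc 0) (Suc 0) = (0\<^sub>m (Suc 0) (Suc 0) :: 'a mat)" by (rule eq_matI) auto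
    note z0 = this
    show ?thesis unfolding Aeq A1 yM Mz N[symmetric] by (simp only: One_nat_def z0)
  qed
  finally have e: "A = X * Y - Y * X" ..
  have Xc: "X \<in> carrier_mat (Suc m) (Suc m)" unfolding X_def using Mc by auto
  have Yc: "Y \<in> carrier_mat (Suc m) (Suc m)" unfolding Y_def using YWc yc zc by auto
  show ?thesis using Xc Yc e by blast
qed


lemma mat_vec_zero[simp]: "A \<in> carrier_mat nr nc \<Longrightarrow> A *\<^sub>v 0\<^sub>v nc = (0\<^sub>v nr :: 'a::comm_ring_1 vec)"
  by (intro eq_vecI) auto

lemma inj_le:
  fixes B :: "'a::field mat"
  assumes B: "B \<in> carrier_mat m r"
    and inj: "\<forall>a\<in>carrier_vec r. B *\<^sub>v a = 0\<^sub>v m \<longrightarrow> a = 0\<^sub>v r"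
  shows "r \<le> m"
proof (rule ccontr)
  assume "\<not> r \<le> m" hence mr: "m < r" by simp
  define B' where "B' = mat r r (\<lambda>(i,j). if i < m then B $$ (i,j) else (0::'a))"
  have B'c: "B' \<in> carrier_mat r r" by (simp add: B'_def)
  have "B' = mat\<^sub>r r r (\<lambda>i. if i = r - 1 then 0\<^sub>v r else row B' i)"
    by (rule eq_matI) (use mr in \<open>auto simp: B'_def\<close>)
  hence "det B' = 0" using det_row_0[of "r - 1" r "\<lambda>i. row B' i"] mr B'c by auto
  then obtain v where v: "v \<in> carrier_vec r" "v \<noteq> 0\<^sub>v r" "B' *\<^sub>v v = 0\<^sub>v r"
    using det_0_iff_vec_prod_zero_field[OF B'c] by auto
  have "B *\<^sub>v v = 0\<^sub>v m"
  proof (rule eq_vecI)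
    fix i assume "i < dim_vec (0\<^sub>v m :: 'a vec)" hence i: "i < m" by simp
    have "row B i = row B' i" using i mr B by (auto simp: B'_def)
    moreover have ir: "i < dim_row B'" using i mr by (simp add: B'_def)
    ultimately have "(B *\<^sub>v v) $ i = (B' *\<^sub>v v) $ i" using i mr B by (simp add: index_mult_mat_vec)
    thus "(B *\<^sub>v v) $ i = 0\<^sub>v m $ i" using v(3) i mr by simp
  qed (use B in simp)
  thus False using inj v by auto
qed

lemma inj_square_inv:
  fixes A :: "'a::field mat"
  assumes A: "A \<in> carrier_mat n n"
    and inj: "\<forall>a\<in>carrier_vec n. A *\<^sub>v a = 0\<^sub>v n \<longrightarrow> a = 0\<^sub>v n"
  shows "\<exists>Q. Q \<in> carrier_mat n n \<and> Q * A = 1\<^sub>m n \<and> A * Q = 1\<^sub>m n"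
proof -
  have "det A \<noteq> 0" using det_0_iff_vec_prod_zero_field[OF A] inj by auto
  from det_non_zero_imp_unit[OF A this, of "()"]
  show ?thesis unfolding Units_def ring_mat_def by auto
qed

definition inspan :: "nat \<Rightarrow> 'a::comm_ring_1 vec list \<Rightarrow> 'a vec \<Rightarrow> bool" where
  "inspan n es w \<longleftrightarrow> (\<exists>a\<in>carrier_vec (length es). mat_of_cols n es *\<^sub>v a = w)"

definition indep :: "nat \<Rightarrow> 'a::comm_ring_1 vec list \<Rightarrow> bool" where
  "indep n es \<longleftrightarrow> (\<forall>a\<in>carrier_vec (length es). mat_of_cols n es *\<^sub>v a = 0\<^sub>v n \<longrightarrow> a = 0\<^sub>v (length es))"

lemma mat_of_cols_append_mult:
  fixes es :: "'a::comm_ring_1 vec list"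
  assumes es: "set es \<subseteq> carrier_vec n" and w: "w \<in> carrier_vec n"
    and a: "a \<in> carrier_vec (Suc (length es))"
  shows "mat_of_cols n (es @ [w]) *\<^sub>v a =
     mat_of_cols n es *\<^sub>v vec (length es) (\<lambda>i. a $ i) + a $ (length es) \<cdot>\<^sub>v w"
proof (rule eq_vecI)
  fix i assume "i < dim_vec (mat_of_cols n es *\<^sub>v vec (length es) (($) a) + a $ length es \<cdot>\<^sub>v w)"
  hence i: "i < n" using carrier_vecD[OF w] by simp
  have "(mat_of_cols n (es @ [w]) *\<^sub>v a) $ i = (\<Sum>j<Suc (length es). (es @ [w]) ! j $ i * a $ j)"
    using i a by (simp add: scalar_prod_def mat_of_cols_index atLeast0LessThan mult.commute)
  also have "\<dots> = (\<Sum>j<length es. es ! j $ i * a $ j) + w $ i * a $ length es"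
    by (simp add: nth_append)
  also have "(\<Sum>j<length es. es ! j $ i * a $ j) = (mat_of_cols n es *\<^sub>v vec (length es) (\<lambda>i. a $ i)) $ i"
    using i by (simp add: scalar_prod_def mat_of_cols_index atLeast0LessThan mult.commute)
  finally show "(mat_of_cols n (es @ [w]) *\<^sub>v a) $ i =
     (mat_of_cols n es *\<^sub>v vec (length es) (\<lambda>i. a $ i) + a $ (length es) \<cdot>\<^sub>v w) $ i"
    using i w by (simp add: mult.commute)
qed (use carrier_vecD[OF w] in simp)

lemma indep_append:
  fixes es :: "'a::field vec list"
  assumes es: "set es \<subseteq> carrier_vec n" and w: "w \<in> carrier_vec n"
    and ind: "indep n es" and ns: "\<not> inspan n es w"
  shows "indep n (es @ [w])"
  unfolding indep_def
proof (intro ballI impI)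
  fix a :: "'a vec" assume a: "a \<in> carrier_vec (length (es @ [w]))"
    and z: "mat_of_cols n (es @ [w]) *\<^sub>v a = 0\<^sub>v n"
  let ?k = "length es"
  let ?a' = "vec ?k (\<lambda>i. a $ i)"
  have a': "a \<in> carrier_vec (Suc ?k)" using a by simp
  have eq: "mat_of_cols n es *\<^sub>v ?a' + a $ ?k \<cdot>\<^sub>v w = 0\<^sub>v n"
    using z mat_of_cols_append_mult[OF es w a'] by simp
  have ak: "a $ ?k = 0"
  proof (rule ccontr)
    assume nz: "a $ ?k \<noteq> 0"
    let ?b = "(- inverse (a $ ?k)) \<cdot>\<^sub>v ?a'"
    have "mat_of_cols n es *\<^sub>v ?b = w"
    proof (rule eq_vecI)
      fix i assume "i < dim_vec w" hence i: "i < n" using carrier_vecD[OF w] by simp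
      have "(mat_of_cols n es *\<^sub>v ?a') $ i + a $ ?k * w $ i = 0"
        using arg_cong[OF eq, of "\<lambda>x. x $ i"] i w by simp
      hence "(mat_of_cols n es *\<^sub>v ?a') $ i = - (a $ ?k * w $ i)" by (simp add: eq_neg_iff_add_eq_0)
      moreover have "(mat_of_cols n es *\<^sub>v ?b) $ i = (- inverse (a $ ?k)) * (mat_of_cols n es *\<^sub>v ?a') $ i"
        using i by (simp add: mult_mat_vec)
      ultimately show "(mat_of_cols n es *\<^sub>v ?b) $ i = w $ i" using nz by (simp add: field_simps)
    qed (use w in simp)
    thus False using ns unfolding inspan_def by auto
  qed
  have c1: "mat_of_cols n es *\<^sub>v ?a' \<in> carrier_vec n" by (rule mult_mat_vec_carrier[of _ n "length es"]) auto
  have "mat_of_cols n es *\<^sub>v ?a' = 0\<^sub>v n" 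
  proof -
    have "0 \<cdot>\<^sub>v w = 0\<^sub>v n" by (rule eq_vecI) (use carrier_vecD[OF w] in auto)
    thus ?thesis using eq ak right_zero_vec[OF c1] by simp
  qed
  hence "?a' = 0\<^sub>v ?k" using ind unfolding indep_def by auto
  thus "a = 0\<^sub>v (length (es @ [w]))"
  proof -
    assume h: "?a' = 0\<^sub>v ?k"
    show ?thesis
    proof (rule eq_vecI)
      fix i assume "i < dim_vec (0\<^sub>v (length (es @ [w])) :: 'a vec)"
      hence i: "i < Suc ?k" by simp
      show "a $ i = 0\<^sub>v (length (es @ [w])) $ i"
      proof (cases "i = ?k")
        case True thus ?thesis using ak i by simp
      next
        case False hence "i < ?k" using i by simp
        thus ?thesis using arg_cong[OF h, of "\<lambda>x. x $ i"] i by simp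
      qed
    qed (use a in simp)
  qed
qed

lemma exists_not_inspan:
  fixes es :: "'a::field vec list"
  assumes es: "set es \<subseteq> carrier_vec n" and len: "length es < n"
  shows "\<exists>w\<in>carrier_vec n. \<not> inspan n es w"
proof (rule ccontr)
  assume "\<not> ?thesis"
  hence all: "\<forall>w\<in>carrier_vec n. \<exists>a\<in>carrier_vec (length es). mat_of_cols n es *\<^sub>v a = w"
    unfolding inspan_def by auto
  let ?k = "length es"
  let ?P = "mat_of_cols n es"
  define f where "f i = (SOME a. a \<in> carrier_vec ?k \<and> ?P *\<^sub>v a = unit_vec n i)" for i
  have f: "f i \<in> carrier_vec ?k \<and> ?P *\<^sub>v f i = unit_vec n i" if "i < n" for i
    unfolding f_def by (rule someI_ex) (use all that in auto)
  define R where "R = mat ?k n (\<lambda>(i,j). f j $ i)"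
  have Rc: "R \<in> carrier_mat ?k n" by (simp add: R_def)
  have Pc: "?P \<in> carrier_mat n ?k" by simp
  have PR: "?P * R = 1\<^sub>m n"
  proof (rule eq_matI)
    fix i j assume "i < dim_row (1\<^sub>m n :: 'a mat)" "j < dim_col (1\<^sub>m n :: 'a mat)"
    hence i: "i < n" and j: "j < n" by auto
    have "col R j = f j" using j f[OF j] by (auto simp: R_def)
    hence "(?P * R) $$ (i,j) = (?P *\<^sub>v f j) $ i" using i j Rc by (simp add: col_def)
    also have "\<dots> = unit_vec n j $ i" using f[OF j] by simp
    finally show "(?P * R) $$ (i,j) = 1\<^sub>m n $$ (i,j)" using i j by (simp add: unit_vec_def)
  qed (use Rc in auto)
  have "\<forall>a\<in>carrier_vec n. R *\<^sub>v a = 0\<^sub>v ?k \<longrightarrow> a = 0\<^sub>v n"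
  proof (intro ballI impI)
    fix a :: "'a vec" assume a: "a \<in> carrier_vec n" and z: "R *\<^sub>v a = 0\<^sub>v ?k"
    have "a = (?P * R) *\<^sub>v a" using PR a by simp
    also have "\<dots> = ?P *\<^sub>v (R *\<^sub>v a)" by (rule assoc_mult_mat_vec[OF Pc Rc a])
    also have "\<dots> = 0\<^sub>v n" using z Pc by simp
    finally show "a = 0\<^sub>v n" .
  qed
  from inj_le[OF Rc this] len show False by simp
qed


primrec kry :: "nat \<Rightarrow> 'a::field mat \<Rightarrow> 'a vec \<Rightarrow> nat \<Rightarrow> 'a vec list \<times> nat" where
  "kry n A v 0 = ([v], 0)"
| "kry n A v (Suc j) = (let es = fst (kry n A v j); c = snd (kry n A v j); u = A *\<^sub>v last es in
     if inspan n es u then (es @ [SOME w. w \<in> carrier_vec n \<and> \<not> inspan n es w], c)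
     else (es @ [(-1)^c \<cdot>\<^sub>v u], Suc c))"

definition ke :: "nat \<Rightarrow> 'a::field mat \<Rightarrow> 'a vec \<Rightarrow> nat \<Rightarrow> 'a vec" where
  "ke n A v j = last (fst (kry n A v j))"

definition kS :: "nat \<Rightarrow> 'a::field mat \<Rightarrow> 'a vec \<Rightarrow> nat \<Rightarrow> bool" where
  "kS n A v j \<longleftrightarrow> \<not> inspan n (fst (kry n A v j)) (A *\<^sub>v ke n A v j)"

lemma kry_fst: "fst (kry n A v j) = map (ke n A v) [0..<Suc j]"
proof (induction j)
  case 0 thus ?case by (simp add: ke_def)
next
  case (Suc j)
  have "fst (kry n A v (Suc j)) = fst (kry n A v j) @ [ke n A v (Suc j)]"
    by (simp add: ke_def Let_def)
  thus ?case using Suc by simp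
qed

lemma kry_len[simp]: "length (fst (kry n A v j)) = Suc j"
  by (simp add: kry_fst)

lemma kry_snd: "snd (kry n A v (Suc j)) = snd (kry n A v j) + (if kS n A v j then 1 else 0)"
  by (simp add: kS_def ke_def Let_def)

lemma ke_Suc_S: "kS n A v j \<Longrightarrow> ke n A v (Suc j) = (-1)^(snd (kry n A v j)) \<cdot>\<^sub>v (A *\<^sub>v ke n A v j)"
  by (simp add: kS_def ke_def Let_def)

lemma ke_Suc_nS: "\<not> kS n A v j \<Longrightarrow> ke n A v (Suc j) =
   (SOME w. w \<in> carrier_vec n \<and> \<not> inspan n (fst (kry n A v j)) w)"
  by (simp add: kS_def ke_def Let_def)

lemma ke0[simp]: "ke n A v 0 = v" by (simp add: ke_def)

lemma smult_neg1_pow_twice: "(v :: 'a::comm_ring_1 vec) \<in> carrier_vec n \<Longrightarrow> (-1)^c \<cdot>\<^sub>v ((-1)^c \<cdot>\<^sub>v v) = v"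
  by (rule eq_vecI) (auto simp: power_mult_distrib[symmetric])

lemma kry_indep:
  fixes A :: "'a::field mat"
  assumes A: "A \<in> carrier_mat n n" and v: "v \<in> carrier_vec n"
    and nsp: "\<not> inspan n [v] (A *\<^sub>v v)"
  shows "j < n \<Longrightarrow> set (fst (kry n A v j)) \<subseteq> carrier_vec n \<and> indep n (fst (kry n A v j))"
proof (induction j)
  case 0
  have "v \<noteq> 0\<^sub>v n"
  proof
    assume "v = 0\<^sub>v n"
    hence "A *\<^sub>v v = mat_of_cols n [v] *\<^sub>v 0\<^sub>v 1" using A mat_vec_zero[OF mat_of_cols_carrier(1)[of n "[v]"]] by simp
    thus False using nsp unfolding inspan_def by force
  qed
  have "indep n [v]"
    unfolding indep_def
  proof (intro ballI impI)
    fix a :: "'a vec" assume a: "a \<in> carrier_vec (length [v])" and z: "mat_of_cols n [v] *\<^sub>v a = 0\<^sub>v n"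
    have "a $ 0 = 0"
    proof (rule ccontr)
      assume nz: "a $ 0 \<noteq> 0"
      have "v = 0\<^sub>v n"
      proof (rule eq_vecI)
        fix i assume "i < dim_vec (0\<^sub>v n :: 'a vec)" hence i: "i < n" by simp
        have "(mat_of_cols n [v] *\<^sub>v a) $ i = v $ i * a $ 0"
          using i a by (simp add: scalar_prod_def mat_of_cols_index)
        thus "v $ i = 0\<^sub>v n $ i" using z i nz by simp
      qed (use v in simp)
      with \<open>v \<noteq> 0\<^sub>v n\<close> show False by simp
    qed
    thus "a = 0\<^sub>v (length [v])" using a by (intro eq_vecI) auto
  qed
  thus ?case using v by simp
next
  case (Suc j)
  hence IH: "set (fst (kry n A v j)) \<subseteq> carrier_vec n" "indep n (fst (kry n A v j))" by auto
  let ?es = "fst (kry n A v j)"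
  have kc: "ke n A v j \<in> carrier_vec n" using IH(1) unfolding ke_def
    by (metis kry_len last_in_set list.size(3) nat.distinct(1) subsetD)
  have fs: "fst (kry n A v (Suc j)) = ?es @ [ke n A v (Suc j)]" by (simp add: ke_def Let_def)
  show ?case
  proof (cases "kS n A v j")
    case True
    let ?c = "snd (kry n A v j)"
    have w: "ke n A v (Suc j) \<in> carrier_vec n" using ke_Suc_S[OF True] kc A by simp
    have "\<not> inspan n ?es (ke n A v (Suc j))"
    proof
      assume "inspan n ?es (ke n A v (Suc j))"
      then obtain a where a: "a \<in> carrier_vec (length ?es)" "mat_of_cols n ?es *\<^sub>v a = ke n A v (Suc j)"
        unfolding inspan_def by auto
      have "mat_of_cols n ?es *\<^sub>v ((-1)^?c \<cdot>\<^sub>v a) = (-1)^?c \<cdot>\<^sub>v (mat_of_cols n ?es *\<^sub>v a)"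
        by (subst mult_mat_vec[of _ n "length ?es"]) (use a in auto)
      also have "\<dots> = A *\<^sub>v ke n A v j" using a(2) ke_Suc_S[OF True] smult_neg1_pow_twice[of "A *\<^sub>v ke n A v j" n ?c] A kc
        by simp
      finally have "inspan n ?es (A *\<^sub>v ke n A v j)" unfolding inspan_def using a(1) by auto
      thus False using True unfolding kS_def by simp
    qed
    thus ?thesis using indep_append[OF IH(1) w IH(2)] IH(1) w fs by auto
  next
    case False
    have "\<exists>w\<in>carrier_vec n. \<not> inspan n ?es w" using exists_not_inspan[OF IH(1)] Suc.prems by simp
    hence ex: "\<exists>w. w \<in> carrier_vec n \<and> \<not> inspan n ?es w" by auto
    have w: "ke n A v (Suc j) \<in> carrier_vec n \<and> \<not> inspan n ?es (ke n A v (Suc j))"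
      unfolding ke_Suc_nS[OF False] by (rule someI_ex[OF ex])
    thus ?thesis using indep_append[OF IH(1) _ IH(2)] IH(1) fs by auto
  qed
qed


lemma mat_vec_unit: fixes P :: "'a::comm_ring_1 mat" assumes P: "P \<in> carrier_mat n m" and k: "k < m" shows "P *\<^sub>v unit_vec m k = col P k"
proof (rule eq_vecI)
  fix i assume "i < dim_vec (col P k)" hence i: "i < n" using P by simp
  have "(P *\<^sub>v unit_vec m k) $ i = (\<Sum>ia\<in>{0..<m}. P $$ (i, ia) * (if ia = k then 1 else 0))"
    using P i by (simp add: scalar_prod_def unit_vec_def)
  also have "\<dots> = (\<Sum>ia\<in>{0..<m}. if ia = k then P $$ (i, ia) else 0)" by (rule sum.cong) auto
  also have "\<dots> = P $$ (i,k)" using k by (simp add: sum.delta')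
  finally show "(P *\<^sub>v unit_vec m k) $ i = col P k $ i" using i k P by simp
qed (use P in simp)

lemma krylov_form:
  fixes A :: "'a::field mat"
  assumes A: "A \<in> carrier_mat n n" and v: "v \<in> carrier_vec n"
    and nsp: "\<not> inspan n [v] (A *\<^sub>v v)" and n0: "0 < n"
  shows "\<exists>P Q. P \<in> carrier_mat n n \<and> Q \<in> carrier_mat n n \<and> Q * P = 1\<^sub>m n \<and> P * Q = 1\<^sub>m n \<and>
     (\<forall>i<n. \<forall>j<n. Suc j < i \<longrightarrow> (Q * A * P) $$ (i,j) = 0) \<and>
     (\<forall>j. Suc j < n \<longrightarrow> (Q * A * P) $$ (Suc j, j) =
         (if kS n A v j then (-1)^(snd (kry n A v j)) else 0)) \<and>
     (Suc 0 < n \<longrightarrow> (Q * A * P) $$ (0,0) = 0)"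
proof -
  let ?E = "fst (kry n A v (n - 1))"
  have KI: "set ?E \<subseteq> carrier_vec n \<and> indep n ?E" using kry_indep[OF A v nsp, of "n - 1"] n0 by simp
  have lenE: "length ?E = n" using n0 by simp
  have Enth: "k < n \<Longrightarrow> ?E ! k = ke n A v k" for k using n0 by (simp add: kry_fst)
  have Enth': "k < n \<Longrightarrow> fst (kry n A v (n - Suc 0)) ! k = ke n A v k" for k using Enth by simp
  have kec: "k < n \<Longrightarrow> ke n A v k \<in> carrier_vec n" for k using KI Enth lenE
    by (metis nth_mem subsetD)
  define P where "P = mat_of_cols n ?E"
  have Pc: "P \<in> carrier_mat n n" unfolding P_def using lenE by (metis mat_of_cols_carrier(1))
  have Pinj: "\<forall>a\<in>carrier_vec n. P *\<^sub>v a = 0\<^sub>v n \<longrightarrow> a = 0\<^sub>v n"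
    using KI lenE unfolding indep_def P_def by simp
  obtain Q where Qc: "Q \<in> carrier_mat n n" and QP: "Q * P = 1\<^sub>m n" and PQ: "P * Q = 1\<^sub>m n"
    using inj_square_inv[OF Pc Pinj] by auto
  have colP: "k < n \<Longrightarrow> col P k = ke n A v k" for k unfolding P_def
  proof -
    assume k: "k < n"
    have "col (mat_of_cols n ?E) k = ?E ! k" by (rule col_mat_of_cols) (use lenE Enth kec k in auto)
    thus "col (mat_of_cols n ?E) k = ke n A v k" using Enth k by simp
  qed
  have Qke: "k < n \<Longrightarrow> Q *\<^sub>v ke n A v k = unit_vec n k" for k
  proof -
    assume k: "k < n"
    have "ke n A v k = P *\<^sub>v unit_vec n k" using mat_vec_unit[OF Pc k] colP[OF k] by simp
    hence "Q *\<^sub>v ke n A v k = (Q * P) *\<^sub>v unit_vec n k" using Qc Pc by (simp add: assoc_mult_mat_vec)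
    thus ?thesis using QP k by simp
  qed
  have entry: "i < n \<Longrightarrow> j < n \<Longrightarrow> (Q * A * P) $$ (i,j) = (Q *\<^sub>v (A *\<^sub>v ke n A v j)) $ i" for i j
  proof -
    assume i: "i < n" and j: "j < n"
    have "(Q * A * P) $$ (i,j) = row (Q * A) i \<bullet> col P j"
      by (rule index_mult_mat(1)) (use i j Qc A Pc in auto)
    also have "\<dots> = ((Q * A) *\<^sub>v ke n A v j) $ i" using i j Qc A colP by simp
    also have "(Q * A) *\<^sub>v ke n A v j = Q *\<^sub>v (A *\<^sub>v ke n A v j)"
      using Qc A kec[OF j] by (simp add: assoc_mult_mat_vec)
    finally show ?thesis .
  qed
  have colS: "Q *\<^sub>v (A *\<^sub>v ke n A v j) = (-1)^(snd (kry n A v j)) \<cdot>\<^sub>v unit_vec n (Suc j)"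
    if S: "kS n A v j" and j: "Suc j < n" for j
  proof -
    let ?c = "snd (kry n A v j)"
    have "ke n A v (Suc j) = (-1)^?c \<cdot>\<^sub>v (A *\<^sub>v ke n A v j)" by (rule ke_Suc_S[OF S])
    hence "A *\<^sub>v ke n A v j = (-1)^?c \<cdot>\<^sub>v ke n A v (Suc j)"
      using smult_neg1_pow_twice[of "A *\<^sub>v ke n A v j" n ?c] A kec j by simp
    hence "Q *\<^sub>v (A *\<^sub>v ke n A v j) = (-1)^?c \<cdot>\<^sub>v (Q *\<^sub>v ke n A v (Suc j))"
      using Qc kec[OF j] by (simp add: mult_mat_vec)
    thus ?thesis using Qke[OF j] by simp
  qed
  have colN: "\<exists>a. Q *\<^sub>v (A *\<^sub>v ke n A v j) = vec n (\<lambda>i. if i \<le> j then a $ i else 0)"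
    if S: "\<not> kS n A v j" and j: "j < n" for j
  proof -
    have "inspan n (fst (kry n A v j)) (A *\<^sub>v ke n A v j)" using S unfolding kS_def by simp
    then obtain a where a: "a \<in> carrier_vec (Suc j)" and aa: "mat_of_cols n (fst (kry n A v j)) *\<^sub>v a = A *\<^sub>v ke n A v j"
      unfolding inspan_def by auto
    define pad where "pad = vec n (\<lambda>i. if i \<le> j then a $ i else (0::'a))"
    have "P *\<^sub>v pad = mat_of_cols n (fst (kry n A v j)) *\<^sub>v a"
    proof (rule eq_vecI)
      fix i assume "i < dim_vec (mat_of_cols n (fst (kry n A v j)) *\<^sub>v a)"
      hence i: "i < n" by simp
      have "(P *\<^sub>v pad) $ i = (\<Sum>k<n. ke n A v k $ i * (if k < Suc j then a $ k else 0))"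
        using i Pc unfolding P_def pad_def
        by (auto simp: scalar_prod_def mat_of_cols_index lenE Enth Enth' atLeast0LessThan intro!: sum.cong)
      also have "\<dots> = (\<Sum>k\<in>{..<n} \<inter> {k. k < Suc j}. ke n A v k $ i * a $ k)"
        by (subst sum.inter_restrict) (auto intro!: sum.cong)
      also have "{..<n} \<inter> {k. k < Suc j} = {..<Suc j}" using j by auto
      also have "(\<Sum>k\<in>{..<Suc j}. ke n A v k $ i * a $ k) = (mat_of_cols n (fst (kry n A v j)) *\<^sub>v a) $ i"
        using i a by (auto simp: scalar_prod_def mat_of_cols_index kry_fst atLeast0LessThan
            simp del: upt_Suc intro!: sum.cong)
      finally show "(P *\<^sub>v pad) $ i = (mat_of_cols n (fst (kry n A v j)) *\<^sub>v a) $ i" .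
    qed (simp add: P_def)
    hence "Q *\<^sub>v (A *\<^sub>v ke n A v j) = (Q * P) *\<^sub>v pad" using aa Qc Pc
      by (simp add: assoc_mult_mat_vec pad_def)
    also have "\<dots> = pad" using QP by (simp add: pad_def)
    finally show ?thesis unfolding pad_def by blast
  qed
  have H1: "\<forall>i<n. \<forall>j<n. Suc j < i \<longrightarrow> (Q * A * P) $$ (i,j) = 0"
  proof (intro allI impI)
    fix i j assume i: "i < n" and j: "j < n" and ij: "Suc j < i"
    show "(Q * A * P) $$ (i,j) = 0"
    proof (cases "kS n A v j")
      case True thus ?thesis using entry[OF i j] colS[OF True] ij i by simp
    next
      case False then obtain a where "Q *\<^sub>v (A *\<^sub>v ke n A v j) = vec n (\<lambda>i. if i \<le> j then a $ i else 0)"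
        using colN j by blast
      thus ?thesis using entry[OF i j] ij i by simp
    qed
  qed
  have H2: "\<forall>j. Suc j < n \<longrightarrow> (Q * A * P) $$ (Suc j, j) =
         (if kS n A v j then (-1)^(snd (kry n A v j)) else 0)"
  proof (intro allI impI)
    fix j assume j: "Suc j < n"
    show "(Q * A * P) $$ (Suc j, j) = (if kS n A v j then (-1)^(snd (kry n A v j)) else 0)"
    proof (cases "kS n A v j")
      case True thus ?thesis using entry[OF j, of j] colS[OF True j] j by simp
    next
      case False then obtain a where "Q *\<^sub>v (A *\<^sub>v ke n A v j) = vec n (\<lambda>i. if i \<le> j then a $ i else 0)"
        using colN j by fastforce
      thus ?thesis using entry[OF j, of j] j False by simp
    qed
  qed
  have S0: "kS n A v 0" using nsp unfolding kS_def by simp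
  have H3: "Suc 0 < n \<longrightarrow> (Q * A * P) $$ (0,0) = 0"
    using entry[of 0 0] colS[OF S0] n0 by simp
  show ?thesis using Pc Qc QP PQ H1 H2 H3 by blast
qed


lemma mat_trace_comm:
  fixes A :: "'a::comm_ring_1 mat"
  assumes A: "A \<in> carrier_mat n m" and B: "B \<in> carrier_mat m n"
  shows "mat_trace (A * B) = mat_trace (B * A)"
proof -
  have "mat_trace (A * B) = (\<Sum>i<n. \<Sum>k<m. A $$ (i,k) * B $$ (k,i))"
    using A B by (simp add: mat_trace_def scalar_prod_def atLeast0LessThan)
  also have "\<dots> = (\<Sum>k<m. \<Sum>i<n. B $$ (k,i) * A $$ (i,k))"
    by (subst sum.swap) (simp add: mult.commute)
  also have "\<dots> = mat_trace (B * A)"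
    using A B by (simp add: mat_trace_def scalar_prod_def atLeast0LessThan)
  finally show ?thesis .
qed

lemma mat_trace_similar:
  fixes A :: "'a::comm_ring_1 mat"
  assumes A: "A \<in> carrier_mat n n" and P: "P \<in> carrier_mat n n" and Q: "Q \<in> carrier_mat n n"
    and PQ: "P * Q = 1\<^sub>m n"
  shows "mat_trace (Q * A * P) = mat_trace A"
proof -
  have "mat_trace (Q * A * P) = mat_trace (P * (Q * A))"
    by (rule mat_trace_comm[of _ n n]) (use A P Q in auto)
  also have "P * (Q * A) = (P * Q) * A" using A P Q by simp
  also have "\<dots> = A" using PQ A by simp
  finally show ?thesis .
qed

lemma comm_transport:
  fixes P Q X Y :: "'a::comm_ring_1 mat"
  assumes P: "P \<in> carrier_mat n n" and Q: "Q \<in> carrier_mat n n" and QP: "Q * P = 1\<^sub>m n"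
    and X: "X \<in> carrier_mat n n" and Y: "Y \<in> carrier_mat n n"
  shows "P * (X * Y - Y * X) * Q = (P * X * Q) * (P * Y * Q) - (P * Y * Q) * (P * X * Q)"
proof -
  have QPZ: "Z \<in> carrier_mat n n \<Longrightarrow> Q * (P * Z) = Z" for Z :: "'a mat"
  proof -
    assume Z: "Z \<in> carrier_mat n n"
    have "Q * (P * Z) = (Q * P) * Z" using P Q Z by simp
    thus ?thesis using QP Z by (metis left_mult_one_mat)
  qed
  have mc: "A \<in> carrier_mat n n \<Longrightarrow> B \<in> carrier_mat n n \<Longrightarrow> A * B \<in> carrier_mat n n" for A B :: "'a mat"
    by (rule mult_carrier_mat)
  have gen: "(P * U * Q) * (P * V * Q) = P * (U * V) * Q" if U: "U \<in> carrier_mat n n" and V: "V \<in> carrier_mat n n" for U V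
  proof -
    have "(P * U * Q) * (P * V * Q) = (P * U) * (Q * (P * V * Q))"
      by (rule assoc_mult_mat[OF mc[OF P U] Q mc[OF mc[OF P V] Q]])
    also have "Q * (P * V * Q) = V * Q"
      using QPZ[OF mc[OF V Q]] assoc_mult_mat[OF P V Q] by simp
    also have "(P * U) * (V * Q) = P * (U * (V * Q))" by (rule assoc_mult_mat[OF P U mc[OF V Q]])
    also have "U * (V * Q) = (U * V) * Q" by (rule assoc_mult_mat[OF U V Q, symmetric])
    also have "P * ((U * V) * Q) = (P * (U * V)) * Q" by (rule assoc_mult_mat[OF P mc[OF U V] Q, symmetric])
    finally show ?thesis .
  qed
  note 1 = gen[OF X Y] and 2 = gen[OF Y X]
  have "P * (X * Y - Y * X) * Q = (P * (X * Y) - P * (Y * X)) * Q"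
    using P X Y by (subst mult_minus_distrib_mat[of _ n n]) auto
  also have "\<dots> = P * (X * Y) * Q - P * (Y * X) * Q"
    using P Q X Y by (subst minus_mult_distrib_mat[of _ n n]) auto
  finally show ?thesis unfolding 1 2 .
qed

lemma alt_sum:
  "(\<Sum>j<k. if kS n A v j then (-1::'a::field)^(snd (kry n A v j)) else 0) =
     (if even (snd (kry n A v k)) then 0 else 1)"
proof (induction k)
  case 0 thus ?case by simp
next
  case (Suc k)
  show ?case using Suc by (cases "kS n A v k") (simp_all add: kry_snd del: kry.simps)
qed

lemma ext_sum0: "A \<in> carrier_mat n n \<Longrightarrow> (\<Sum>t<n. ext n A (int t) (int t + 0)) = mat_trace A"
  by (simp add: ext_def mat_trace_def)

lemma ext_sum1:
  assumes "A \<in> carrier_mat (Suc m) (Suc m)"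
  shows "(\<Sum>t<Suc m. ext (Suc m) A (int t) (int t + - 1)) = (\<Sum>j<m. A $$ (Suc j, j))"
proof -
  have "(\<Sum>t<Suc m. ext (Suc m) A (int t) (int t + - 1)) =
     ext (Suc m) A 0 (-1) + (\<Sum>j<m. ext (Suc m) A (int (Suc j)) (int (Suc j) + - 1))"
    by (subst sum.lessThan_Suc_shift) simp
  also have "\<dots> = (\<Sum>j<m. A $$ (Suc j, j))"
  proof -
    have "nat (1 + int j) = Suc j" for j by (metis add.commute nat_int of_nat_Suc)
    thus ?thesis by (simp add: ext_def)
  qed
  finally show ?thesis .
qed

lemma ext_sum2:
  assumes "\<forall>i<n. \<forall>j<n. Suc j < i \<longrightarrow> A $$ (i,j) = 0" and "c \<le> -2"
  shows "(\<Sum>t<n. ext n A (int t) (int t + c)) = 0"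
proof (rule sum.neutral, intro ballI)
  fix t assume t: "t \<in> {..<n}"
  show "ext n A (int t) (int t + c) = 0"
  proof (cases "0 \<le> int t + c")
    case True
    hence "Suc (nat (int t + c)) < t" using assms(2) by linarith
    moreover have "nat (int t + c) < n" using t assms(2) by (simp add: nat_less_iff)
    ultimately show ?thesis using assms(1) t unfolding ext_def by auto
  qed (simp add: ext_def)
qed

lemma ext_sum_neg:
  assumes "c < 0" and "\<forall>i<n. \<forall>j<n. i \<noteq> j \<longrightarrow> A $$ (i,j) = 0"
  shows "(\<Sum>t<n. ext n A (int t) (int t + c)) = 0"
proof (rule sum.neutral, intro ballI)
  fix t assume t: "t \<in> {..<n}"
  show "ext n A (int t) (int t + c) = 0"
  proof (cases "0 \<le> int t + c")
    case True
    hence "nat (int t + c) \<noteq> t" "nat (int t + c) < n" using assms(1) t by auto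
    thus ?thesis using assms(2) t unfolding ext_def by auto
  qed (simp add: ext_def)
qed


lemma hyp_cases:
  assumes "P 0" "P (-1)" "\<And>c. c \<le> -2 \<Longrightarrow> P c"
  shows "\<forall>c::int. c \<le> 0 \<longrightarrow> P c"
proof (intro allI impI)
  fix c :: int assume "c \<le> 0"
  hence "c = 0 \<or> c = -1 \<or> c \<le> -2" by arith
  thus "P c" using assms by auto
qed

lemma commutator_from_similar:
  fixes A B P Q :: "'a::field mat"
  assumes A: "A \<in> carrier_mat n n" and P: "P \<in> carrier_mat n n" and Q: "Q \<in> carrier_mat n n"
    and QP: "Q * P = 1\<^sub>m n" and PQ: "P * Q = 1\<^sub>m n"
    and X: "X \<in> carrier_mat n n" and Y: "Y \<in> carrier_mat n n"
    and B: "Q * A * P = X * Y - Y * X"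
  shows "is_commutator n A"
proof -
  have "P * (Q * A * P) * Q = A"
  proof -
    have "P * (Q * A * P) * Q = (P * Q) * A * (P * Q)" using P Q A
      by (simp add: assoc_mult_mat[of _ n n _ n _ n])
    thus ?thesis using PQ A by simp
  qed
  hence "A = (P * X * Q) * (P * Y * Q) - (P * Y * Q) * (P * X * Q)"
    using comm_transport[OF P Q QP X Y] B by simp
  moreover have "P * X * Q \<in> carrier_mat n n" "P * Y * Q \<in> carrier_mat n n" using P Q X Y by auto
  ultimately show ?thesis unfolding is_commutator_def by blast
qed

theorem AM:
  fixes A :: "'a::field mat"
  assumes A: "A \<in> carrier_mat n n" and tr: "mat_trace A = 0"
  shows "is_commutator n A"
proof (cases "\<forall>i<n. \<forall>j<n. i \<noteq> j \<longrightarrow> A $$ (i,j) = 0")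
  case True
  have "\<forall>c\<le>0. (\<Sum>t<n. ext n A (int t) (int t + c)) = 0"
  proof (intro allI impI)
    fix c :: int assume c: "c \<le> 0"
    show "(\<Sum>t<n. ext n A (int t) (int t + c)) = 0"
    proof (cases "c = 0")
      case True thus ?thesis using ext_sum0[OF A] tr by simp
    next
      case False thus ?thesis using ext_sum_neg[of c n A] c \<open>\<forall>i<n. \<forall>j<n. i \<noteq> j \<longrightarrow> A $$ (i,j) = 0\<close> by simp
    qed
  qed
  from N_trick[OF A this] show ?thesis unfolding is_commutator_def
    by (intro exI[of _ "shiftM n"] exI[of _ "Ytr n A"]) auto
next
  case False
  then obtain i j where i: "i < n" and j: "j < n" and ij: "i \<noteq> j" and aij: "A $$ (i,j) \<noteq> 0" by blast
  define v where "v = (unit_vec n j :: 'a vec)"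
  have v: "v \<in> carrier_vec n" by (simp add: v_def)
  have nsp: "\<not> inspan n [v] (A *\<^sub>v v)"
  proof
    assume "inspan n [v] (A *\<^sub>v v)"
    then obtain a where a: "a \<in> carrier_vec 1" and e: "mat_of_cols n [v] *\<^sub>v a = A *\<^sub>v v"
      unfolding inspan_def by auto
    have "(mat_of_cols n [v] *\<^sub>v a) $ i = v $ i * a $ 0"
      using i a by (simp add: scalar_prod_def mat_of_cols_index)
    also have "\<dots> = 0" using ij i by (simp add: v_def unit_vec_def)
    finally have "(A *\<^sub>v v) $ i = 0" using e by simp
    moreover have "(A *\<^sub>v v) $ i = A $$ (i,j)" unfolding v_def using mat_vec_unit[OF A j] i j A by simp
    ultimately show False using aij by simp
  qed
  obtain m where nm: "n = Suc m" using i by (cases n) auto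
  have m1: "1 \<le> m" using i j ij nm by auto
  obtain P Q where Pc: "P \<in> carrier_mat n n" and Qc: "Q \<in> carrier_mat n n" and QP: "Q * P = 1\<^sub>m n"
    and PQ: "P * Q = 1\<^sub>m n"
    and H1: "\<forall>i<n. \<forall>j<n. Suc j < i \<longrightarrow> (Q * A * P) $$ (i,j) = 0"
    and H2: "\<forall>j. Suc j < n \<longrightarrow> (Q * A * P) $$ (Suc j, j) =
         (if kS n A v j then (-1)^(snd (kry n A v j)) else 0)"
    and H3: "Suc 0 < n \<longrightarrow> (Q * A * P) $$ (0,0) = 0"
    using krylov_form[OF A v nsp] nm by blast
  define B where "B = Q * A * P"
  have Bc: "B \<in> carrier_mat n n" using Pc Qc A by (simp add: B_def)
  have trB: "mat_trace B = 0" unfolding B_def using mat_trace_similar[OF A Pc Qc PQ] tr by simp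
  define f where "f j = (if kS n A v j then (-1::'a)^(snd (kry n A v j)) else 0)" for j
  have sumf: "(\<Sum>j<m. B $$ (Suc j, j)) = (\<Sum>j<m. f j)"
    using H2 nm unfolding B_def f_def by (intro sum.cong) auto
  have altf: "(\<Sum>j<m. f j) = (if even (snd (kry n A v m)) then 0 else 1)"
    unfolding f_def by (rule alt_sum)
  have "\<exists>X Y. X \<in> carrier_mat n n \<and> Y \<in> carrier_mat n n \<and> B = X * Y - Y * X"
  proof (cases "even (snd (kry n A v m))")
    case True
    have "\<forall>c\<le>0. (\<Sum>t<n. ext n B (int t) (int t + c)) = 0"
    proof (rule hyp_cases)
      show "(\<Sum>t<n. ext n B (int t) (int t + 0)) = 0" using ext_sum0[OF Bc] trB by simp
      show "(\<Sum>t<n. ext n B (int t) (int t + - 1)) = 0"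
        using ext_sum1[of B m] Bc nm sumf altf True by simp
      show "(\<Sum>t<n. ext n B (int t) (int t + c)) = 0" if "c \<le> -2" for c
        using ext_sum2[OF _ that] H1 unfolding B_def by blast
    qed
    from N_trick[OF Bc this] show ?thesis by (intro exI[of _ "shiftM n"] exI[of _ "Ytr n B"]) auto
  next
    case False
    obtain m' where mm: "m = Suc m'" using m1 by (cases m) auto
    define A4 where "A4 = mat m m (\<lambda>(i,j). B $$ (Suc i, Suc j))"
    have A4c: "A4 \<in> carrier_mat m m" by (simp add: A4_def)
    have "\<forall>c\<le>0. (\<Sum>t<m. ext m A4 (int t) (int t + c)) = 0"
    proof (rule hyp_cases)
      have "mat_trace B = B $$ (0,0) + (\<Sum>t<m. B $$ (Suc t, Suc t))"
        unfolding mat_trace_def using Bc nm sum.lessThan_Suc_shift[of "\<lambda>t. B $$ (t,t)" m] by simp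
      moreover have "mat_trace A4 = (\<Sum>t<m. B $$ (Suc t, Suc t))" by (simp add: A4_def mat_trace_def)
      ultimately have "mat_trace A4 = 0" using trB H3 nm m1 unfolding B_def by simp
      thus "(\<Sum>t<m. ext m A4 (int t) (int t + 0)) = 0" using ext_sum0[OF A4c] by simp
      have "(\<Sum>t<m. ext m A4 (int t) (int t + - 1)) = (\<Sum>j<m'. A4 $$ (Suc j, j))"
        using ext_sum1[of A4 m'] A4c mm by simp
      also have "\<dots> = (\<Sum>j<m'. f (Suc j))"
        using H2 nm mm unfolding A4_def B_def f_def by (intro sum.cong) auto
      also have "\<dots> = 0"
      proof -
        have "(\<Sum>j<m. f j) = f 0 + (\<Sum>j<m'. f (Suc j))" unfolding mm by (rule sum.lessThan_Suc_shift)
        moreover have "f 0 = 1" unfolding f_def using nsp by (simp add: kS_def)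
        ultimately show ?thesis using altf False by simp
      qed
      finally show "(\<Sum>t<m. ext m A4 (int t) (int t + - 1)) = 0" .
      show "(\<Sum>t<m. ext m A4 (int t) (int t + c)) = 0" if "c \<le> -2" for c
      proof (rule ext_sum2[OF _ that], intro allI impI)
        fix i j assume "i < m" "j < m" "Suc j < i"
        thus "A4 $$ (i,j) = 0" using H1 nm unfolding A4_def B_def by auto
      qed
    qed
    hence "\<forall>c\<le>0. (\<Sum>t<m. ext m (mat m m (\<lambda>(i,j). B $$ (Suc i, Suc j))) (int t) (int t + c)) = 0"
      unfolding A4_def .
    from split_trick[OF _ _ this] Bc nm H3 m1 show ?thesis unfolding B_def by auto
  qed
  then obtain X Y where X: "X \<in> carrier_mat n n" and Y: "Y \<in> carrier_mat n n" and e: "B = X * Y - Y * X"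
    by blast
  show ?thesis by (rule commutator_from_similar[OF A Pc Qc QP PQ X Y e[unfolded B_def]])
qed


lemma mat_trace_add:
  fixes A B :: "'a::comm_ring_1 mat"
  assumes "A \<in> carrier_mat m m" "B \<in> carrier_mat m m"
  shows "mat_trace (A + B) = mat_trace A + mat_trace B"
  using assms by (simp add: mat_trace_def sum.distrib)

lemma mat_trace_minus:
  fixes A B :: "'a::comm_ring_1 mat"
  assumes "A \<in> carrier_mat m m" "B \<in> carrier_mat m m"
  shows "mat_trace (A - B) = mat_trace A - mat_trace B"
  using assms by (simp add: mat_trace_def sum_subtractf)

lemma mat_trace_zero: "mat_trace (0\<^sub>m m m :: 'a::comm_ring_1 mat) = 0"
  by (simp add: mat_trace_def)

lemma commutator_trace:
  fixes A :: "'a::field mat"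
  assumes "is_commutator m A"
  shows "mat_trace A = 0"
proof -
  obtain B C where B: "B \<in> carrier_mat m m" and C: "C \<in> carrier_mat m m" and A: "A = B * C - C * B"
    using assms unfolding is_commutator_def by blast
  have "mat_trace A = mat_trace (B * C) - mat_trace (C * B)"
    unfolding A by (rule mat_trace_minus[of _ m]) (use B C in auto)
  also have "mat_trace (B * C) = mat_trace (C * B)" by (rule mat_trace_comm[OF B C])
  finally show ?thesis by simp
qed

lemma neg1_powi_succ: "(-1::'a::field) powi (i + 1) = - ((-1) powi i)"
  by (simp add: power_int_add)

lemma neg1_powi_sq: "(-1::'a::field) powi i * (-1) powi i = 1"
  by (simp add: power_int_mult_distrib[symmetric])

lemma telescope:
  fixes u :: "int \<Rightarrow> 'a::field"
  assumes "M \<le> N"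
  shows "(\<Sum>i\<in>{M..N}. (-1) powi i * (u (i - 1) + u i)) = (-1) powi M * u (M - 1) + (-1) powi N * u N"
  using assms
proof (induction N rule: int_ge_induct)
  case base thus ?case by (simp add: algebra_simps)
next
  case (step N)
  have "{M..N + 1} = insert (N + 1) {M..N}" using step(1) by auto
  hence "(\<Sum>i\<in>{M..N+1}. (-1) powi i * (u (i - 1) + u i)) =
     (-1) powi (N+1) * (u N + u (N+1)) + (\<Sum>i\<in>{M..N}. (-1) powi i * (u (i - 1) + u i))"
    by simp
  also have "\<dots> = (-1) powi M * u (M - 1) + (-1) powi (N+1) * u (N+1)"
    using step(2) neg1_powi_succ[of N, where 'a='a] by (simp add: algebra_simps)
  finally show ?case .
qed

lemma stretch_ends:
  assumes "is_stretch n d M N"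
  shows "d (M - 1) = 0\<^sub>m (n M) (n (M - 1))" "d N = 0\<^sub>m (n (N + 1)) (n N)"
proof -
  from assms have MN: "M \<le> N" and nz: "nonzero_on n d {M..N}"
    and max: "\<And>M' N'. M' \<le> N' \<Longrightarrow> {M..N} \<subseteq> {M'..N'} \<Longrightarrow> nonzero_on n d {M'..N'} \<Longrightarrow> {M'..N'} = {M..N}"
    unfolding is_stretch_def by blast+
  show "d (M - 1) = 0\<^sub>m (n M) (n (M - 1))"
  proof (rule ccontr)
    assume h: "d (M - 1) \<noteq> 0\<^sub>m (n M) (n (M - 1))"
    have "nonzero_on n d {M - 1..N}" unfolding nonzero_on_def
    proof (intro allI impI)
      fix i assume i: "i \<in> {M - 1..N} \<and> i + 1 \<in> {M - 1..N}"
      show "d i \<noteq> 0\<^sub>m (n (i + 1)) (n i)"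
      proof (cases "i = M - 1")
        case True thus ?thesis using h by simp
      next
        case False hence "i \<in> {M..N} \<and> i + 1 \<in> {M..N}" using i by auto
        thus ?thesis using nz unfolding nonzero_on_def by blast
      qed
    qed
    hence "{M - 1..N} = {M..N}" using max[of "M - 1" N] MN by auto
    moreover have "M - 1 \<in> {M - 1..N}" using MN by auto
    ultimately show False by auto
  qed
  show "d N = 0\<^sub>m (n (N + 1)) (n N)"
  proof (rule ccontr)
    assume h: "d N \<noteq> 0\<^sub>m (n (N + 1)) (n N)"
    have "nonzero_on n d {M..N + 1}" unfolding nonzero_on_def
    proof (intro allI impI)
      fix i assume i: "i \<in> {M..N + 1} \<and> i + 1 \<in> {M..N + 1}"
      show "d i \<noteq> 0\<^sub>m (n (i + 1)) (n i)"
      proof (cases "i = N")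
        case True thus ?thesis using h by simp
      next
        case False hence "i \<in> {M..N} \<and> i + 1 \<in> {M..N}" using i by auto
        thus ?thesis using nz unfolding nonzero_on_def by blast
      qed
    qed
    hence "{M..N + 1} = {M..N}" using max[of M "N + 1"] MN by auto
    moreover have "N + 1 \<in> {M..N + 1}" using MN by auto
    ultimately show False by auto
  qed
qed

lemma stretch_intro:
  assumes ab: "a < b" and da: "d a = 0\<^sub>m (n (a + 1)) (n a)" and db: "d b = 0\<^sub>m (n (b + 1)) (n b)"
    and mid: "\<And>i. a < i \<Longrightarrow> i < b \<Longrightarrow> d i \<noteq> 0\<^sub>m (n (i + 1)) (n i)"
  shows "is_stretch n d (a + 1) b"
  unfolding is_stretch_def
proof (intro conjI allI impI)
  show "a + 1 \<le> b" using ab by simp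
  show "nonzero_on n d {a + 1..b}" unfolding nonzero_on_def using mid by auto
  fix M' N' assume h: "M' \<le> N' \<and> {a + 1..b} \<subseteq> {M'..N'} \<and> nonzero_on n d {M'..N'}"
  hence sub: "M' \<le> a + 1" "b \<le> N'" using ab by auto
  have "M' = a + 1"
  proof (rule ccontr)
    assume "M' \<noteq> a + 1" hence "a \<in> {M'..N'} \<and> a + 1 \<in> {M'..N'}" using sub ab by auto
    thus False using h da unfolding nonzero_on_def by blast
  qed
  moreover have "N' = b"
  proof (rule ccontr)
    assume "N' \<noteq> b" hence "b \<in> {M'..N'} \<and> b + 1 \<in> {M'..N'}" using sub ab by auto
    thus False using h db unfolding nonzero_on_def by blast
  qed
  ultimately show "{M'..N'} = {a + 1..b}" by simp
qed

theorem a_imp_b: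
  fixes n :: "int \<Rightarrow> nat" and d \<phi> :: "int \<Rightarrow> 'k::field mat"
  assumes cx: "is_complex n d" and cm: "is_chain_map n d \<phi>"
    and a: "\<exists>\<psi>. is_chain_map n d \<psi> \<and> pointwise_commutator n \<psi> \<and> chain_homotopic n d \<phi> \<psi>"
    and st: "is_stretch n d M N"
  shows "(\<Sum>i\<in>{M..N}. (-1) powi i * mat_trace (\<phi> i)) = 0"
proof -
  obtain \<psi> h where psi: "is_chain_map n d \<psi>" and pc: "pointwise_commutator n \<psi>"
    and hc: "\<And>i. h i \<in> carrier_mat (n (i - 1)) (n i)"
    and he: "\<And>i. \<phi> i - \<psi> i = d (i - 1) * h i + h (i + 1) * d i"
    using a unfolding chain_homotopic_def by blast
  have dc: "\<And>i. d i \<in> carrier_mat (n (i + 1)) (n i)" using cx unfolding is_complex_def by blast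
  have phic: "\<And>i. \<phi> i \<in> carrier_mat (n i) (n i)" using cm unfolding is_chain_map_def by blast
  have psic: "\<And>i. \<psi> i \<in> carrier_mat (n i) (n i)" using psi unfolding is_chain_map_def by blast
  define u where "u i = mat_trace (h (i + 1) * d i)" for i
  have tr: "mat_trace (\<phi> i) = u (i - 1) + u i" for i
  proof -
    have c1: "d (i - 1) * h i \<in> carrier_mat (n i) (n i)" using dc[of "i - 1"] hc[of i] by auto
    have c2: "h (i + 1) * d i \<in> carrier_mat (n i) (n i)" using dc[of i] hc[of "i + 1"] by auto
    have "mat_trace (\<phi> i) - mat_trace (\<psi> i) = mat_trace (d (i - 1) * h i + h (i + 1) * d i)"
      using mat_trace_minus[OF phic psic] he by simp
    also have "\<dots> = mat_trace (d (i - 1) * h i) + mat_trace (h (i + 1) * d i)"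
      by (rule mat_trace_add[OF c1 c2])
    also have "mat_trace (d (i - 1) * h i) = mat_trace (h i * d (i - 1))"
      by (rule mat_trace_comm) (use dc[of "i - 1"] hc[of i] in auto)
    also have "\<dots> = u (i - 1)" by (simp add: u_def)
    finally show ?thesis using commutator_trace[of "n i" "\<psi> i"] pc unfolding pointwise_commutator_def u_def
      by simp
  qed
  have MN: "M \<le> N" using st unfolding is_stretch_def by simp
  have "(\<Sum>i\<in>{M..N}. (-1) powi i * mat_trace (\<phi> i)) = (\<Sum>i\<in>{M..N}. (-1) powi i * (u (i - 1) + u i))"
    using tr by simp
  also have "\<dots> = (-1) powi M * u (M - 1) + (-1) powi N * u N" by (rule telescope[OF MN])
  also have "u (M - 1) = 0" unfolding u_def using stretch_ends(1)[OF st] hc[of M]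
    by (simp add: mat_trace_zero)
  also have "u N = 0" unfolding u_def using stretch_ends(2)[OF st] hc[of "N + 1"]
    by (simp add: mat_trace_zero)
  finally show ?thesis by simp
qed




definition LZ :: "(int \<Rightarrow> bool) \<Rightarrow> int \<Rightarrow> int" where
  "LZ Zp i = i - int (LEAST k::nat. 0 < k \<and> Zp (i - int k))"
definition RZ :: "(int \<Rightarrow> bool) \<Rightarrow> int \<Rightarrow> int" where
  "RZ Zp i = i + int (LEAST k::nat. 0 < k \<and> Zp (i + int k))"
definition EL :: "(int \<Rightarrow> bool) \<Rightarrow> int \<Rightarrow> bool" where
  "EL Zp i \<longleftrightarrow> (\<exists>k::nat. 0 < k \<and> Zp (i - int k))"
definition ER :: "(int \<Rightarrow> bool) \<Rightarrow> int \<Rightarrow> bool" where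
  "ER Zp i \<longleftrightarrow> (\<exists>k::nat. 0 < k \<and> Zp (i + int k))"
definition anc :: "(int \<Rightarrow> bool) \<Rightarrow> int \<Rightarrow> int" where
  "anc Zp i = (if Zp i then i else if EL Zp i then LZ Zp i else if ER Zp i then RZ Zp i else 0)"

lemma LZ_props:
  assumes "EL Zp i"
  shows "Zp (LZ Zp i)" "LZ Zp i < i" "\<And>z. LZ Zp i < z \<Longrightarrow> z < i \<Longrightarrow> \<not> Zp z"
proof -
  let ?P = "\<lambda>k::nat. 0 < k \<and> Zp (i - int k)"
  have ex: "\<exists>k. ?P k" using assms unfolding EL_def by blast
  have L: "?P (Least ?P)" by (rule LeastI_ex[OF ex])
  thus "Zp (LZ Zp i)" "LZ Zp i < i" unfolding LZ_def by auto
  fix z assume z1: "LZ Zp i < z" and z2: "z < i"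
  let ?k = "nat (i - z)"
  have "?k < Least ?P" using z1 z2 unfolding LZ_def by linarith
  hence "\<not> ?P ?k" by (rule not_less_Least)
  moreover have "0 < ?k" "i - int ?k = z" using z2 by auto
  ultimately show "\<not> Zp z" by auto
qed

lemma RZ_props:
  assumes "ER Zp i"
  shows "Zp (RZ Zp i)" "i < RZ Zp i" "\<And>z. i < z \<Longrightarrow> z < RZ Zp i \<Longrightarrow> \<not> Zp z"
proof -
  let ?P = "\<lambda>k::nat. 0 < k \<and> Zp (i + int k)"
  have ex: "\<exists>k. ?P k" using assms unfolding ER_def by blast
  have L: "?P (Least ?P)" by (rule LeastI_ex[OF ex])
  thus "Zp (RZ Zp i)" "i < RZ Zp i" unfolding RZ_def by auto
  fix z assume z1: "i < z" and z2: "z < RZ Zp i"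
  let ?k = "nat (z - i)"
  have "?k < Least ?P" using z1 z2 unfolding RZ_def by linarith
  hence "\<not> ?P ?k" by (rule not_less_Least)
  moreover have "0 < ?k" "i + int ?k = z" using z1 by auto
  ultimately show "\<not> Zp z" by auto
qed

lemma LZ_unique:
  assumes "Zp z" "z < i" "\<And>w. z < w \<Longrightarrow> w < i \<Longrightarrow> \<not> Zp w"
  shows "EL Zp i" "LZ Zp i = z"
proof -
  show el: "EL Zp i" unfolding EL_def using assms(1,2) by (intro exI[of _ "nat (i - z)"]) auto
  note p = LZ_props[OF el]
  show "LZ Zp i = z"
  proof (rule ccontr)
    assume "LZ Zp i \<noteq> z"
    hence "LZ Zp i < z \<or> z < LZ Zp i" by auto
    thus False using p assms by blast
  qed
qed

lemma RZ_unique: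
  assumes "Zp z" "i < z" "\<And>w. i < w \<Longrightarrow> w < z \<Longrightarrow> \<not> Zp w"
  shows "ER Zp i" "RZ Zp i = z"
proof -
  show er: "ER Zp i" unfolding ER_def using assms(1,2) by (intro exI[of _ "nat (z - i)"]) auto
  note p = RZ_props[OF er]
  show "RZ Zp i = z"
  proof (rule ccontr)
    assume "RZ Zp i \<noteq> z"
    hence "RZ Zp i < z \<or> z < RZ Zp i" by auto
    thus False using p assms by blast
  qed
qed

lemma anc_step:
  assumes key: "\<And>a b. a < b \<Longrightarrow> Zp a \<Longrightarrow> Zp b \<Longrightarrow> (\<And>i. a < i \<Longrightarrow> i < b \<Longrightarrow> \<not> Zp i) \<Longrightarrow> F a = F b"
  shows "F (anc Zp i) = F (anc Zp (i - 1))"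
proof (cases "Zp i")
  case Zi: True
  show ?thesis
  proof (cases "Zp (i - 1)")
    case True
    have "F (i - 1) = F i" by (rule key) (use Zi True in auto)
    thus ?thesis using Zi True by (simp add: anc_def)
  next
    case nZ1: False
    show ?thesis
    proof (cases "EL Zp (i - 1)")
      case True
      note p = LZ_props[OF True]
      have "F (LZ Zp (i - 1)) = F i"
      proof (rule key)
        show "LZ Zp (i - 1) < i" using p by simp
        fix w assume "LZ Zp (i - 1) < w" "w < i"
        thus "\<not> Zp w" using p nZ1 by (cases "w = i - 1") auto
      qed (use p Zi in auto)
      thus ?thesis using Zi nZ1 True by (simp add: anc_def)
    next
      case False
      have "RZ Zp (i - 1) = i" "ER Zp (i - 1)" using RZ_unique[of Zp i "i - 1"] Zi by auto
      thus ?thesis using Zi nZ1 False by (simp add: anc_def)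
    qed
  qed
next
  case nZi: False
  show ?thesis
  proof (cases "Zp (i - 1)")
    case True
    have "LZ Zp i = i - 1" "EL Zp i" using LZ_unique[of Zp "i - 1" i] True by auto
    thus ?thesis using nZi True by (simp add: anc_def)
  next
    case nZ1: False
    show ?thesis
    proof (cases "EL Zp (i - 1)")
      case True
      note p = LZ_props[OF True]
      have u: "LZ Zp i = LZ Zp (i - 1)" "EL Zp i"
      proof -
        have *: "\<And>w. LZ Zp (i - 1) < w \<Longrightarrow> w < i \<Longrightarrow> \<not> Zp w"
        proof -
          fix w assume "LZ Zp (i - 1) < w" "w < i"
          thus "\<not> Zp w" using p nZ1 by (cases "w = i - 1") auto
        qed
        show "LZ Zp i = LZ Zp (i - 1)" "EL Zp i" using LZ_unique[of Zp "LZ Zp (i - 1)" i, OF p(1) _ *] p(2) by auto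
      qed
      thus ?thesis using nZi nZ1 True by (simp add: anc_def)
    next
      case nEL1: False
      have nEL: "\<not> EL Zp i"
      proof
        assume "EL Zp i"
        then obtain k :: nat where k: "0 < k" "Zp (i - int k)" unfolding EL_def by blast
        show False
        proof (cases "k = 1")
          case True thus False using k nZ1 by simp
        next
          case False
          hence "0 < k - 1" "i - 1 - int (k - 1) = i - int k" using k by auto
          thus False using nEL1 k unfolding EL_def by metis
        qed
      qed
      show ?thesis
      proof (cases "ER Zp i")
        case True
        note p = RZ_props[OF True]
        have *: "\<And>w. i - 1 < w \<Longrightarrow> w < RZ Zp i \<Longrightarrow> \<not> Zp w"
        proof -
          fix w assume "i - 1 < w" "w < RZ Zp i"
          thus "\<not> Zp w" using p nZi by (cases "w = i") auto
        qed
        have "RZ Zp (i - 1) = RZ Zp i" "ER Zp (i - 1)" using RZ_unique[of Zp "RZ Zp i" "i - 1", OF p(1) _ *] p(2) by auto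
        thus ?thesis using nZi nZ1 nEL nEL1 True by (simp add: anc_def)
      next
        case nER: False
        have "\<not> ER Zp (i - 1)"
        proof
          assume "ER Zp (i - 1)"
          then obtain k :: nat where k: "0 < k" "Zp (i - 1 + int k)" unfolding ER_def by blast
          show False
          proof (cases "k = 1")
            case True thus False using k nZi by simp
          next
            case False
            hence "0 < k - 1" "i + int (k - 1) = i - 1 + int k" using k by auto
            thus False using nER k unfolding ER_def by metis
          qed
        qed
        thus ?thesis using nZi nZ1 nEL nEL1 nER by (simp add: anc_def)
      qed
    qed
  qed
qed


definition Pot :: "(int \<Rightarrow> 'a::comm_ring_1) \<Rightarrow> int \<Rightarrow> 'a" where
  "Pot T x = (\<Sum>j\<in>{0<..x}. T j) - (\<Sum>j\<in>{x<..0}. T j)"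

lemma pot_step: "Pot T x - Pot T (x - 1) = T x"
proof (cases "1 \<le> x")
  case True
  have "{0<..x} = insert x {0<..x - 1}" using True by auto
  moreover have "{x<..0} = {}" "{x - 1<..0} = {}" using True by auto
  ultimately show ?thesis unfolding Pot_def by simp
next
  case False
  have "{0<..x} = {}" "{0<..x - 1} = {}" using False by auto
  moreover have "{x - 1<..0} = insert x {x<..0}" using False by auto
  ultimately show ?thesis unfolding Pot_def by simp
qed

lemma pot_diff:
  assumes "a \<le> b"
  shows "(\<Sum>j\<in>{a<..b}. T j) = Pot T b - Pot T a"
  using assms
proof (induction b rule: int_ge_induct)
  case base thus ?case by simp
next
  case (step b)
  have "{a<..b + 1} = insert (b + 1) {a<..b}" using step(1) by auto
  hence "(\<Sum>j\<in>{a<..b + 1}. T j) = T (b + 1) + (\<Sum>j\<in>{a<..b}. T j)" by simp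
  also have "T (b + 1) = Pot T (b + 1) - Pot T b" using pot_step[of T "b + 1"] by simp
  finally show ?case using step(2) by simp
qed

lemma mat_minus_minus:
  fixes A X :: "'a::comm_ring_1 mat"
  assumes "A \<in> carrier_mat m m" "X \<in> carrier_mat m m"
  shows "A - (A - X) = X"
  using assms by (intro eq_matI) auto

theorem b_imp_a:
  fixes n :: "int \<Rightarrow> nat" and d \<phi> :: "int \<Rightarrow> 'k::field mat"
  assumes cx: "is_complex n d" and cm: "is_chain_map n d \<phi>"
    and hb: "\<forall>M N. is_stretch n d M N \<longrightarrow> (\<Sum>i\<in>{M..N}. (-1) powi i * mat_trace (\<phi> i)) = 0"
  shows "\<exists>\<psi>. is_chain_map n d \<psi> \<and> pointwise_commutator n \<psi> \<and> chain_homotopic n d \<phi> \<psi>"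
proof -
  have dc: "\<And>i. d i \<in> carrier_mat (n (i + 1)) (n i)" using cx unfolding is_complex_def by blast
  have dd: "\<And>i. d (i + 1) * d i = 0\<^sub>m (n (i + 2)) (n i)" using cx unfolding is_complex_def by blast
  have phic: "\<And>i. \<phi> i \<in> carrier_mat (n i) (n i)" using cm unfolding is_chain_map_def by blast
  have phid: "\<And>i. \<phi> (i + 1) * d i = d i * \<phi> i" using cm unfolding is_chain_map_def by blast
  define Zp where "Zp i \<longleftrightarrow> d i = 0\<^sub>m (n (i + 1)) (n i)" for i
  define T where "T j = (-1) powi j * mat_trace (\<phi> j)" for j
  define s where "s i = ((-1)::'k) powi i" for i
  have key: "Pot T a = Pot T b" if ab: "a < b" and za: "Zp a" and zb: "Zp b"
    and mid: "\<And>i. a < i \<Longrightarrow> i < b \<Longrightarrow> \<not> Zp i" for a b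
  proof -
    have "is_stretch n d (a + 1) b"
      by (rule stretch_intro) (use ab za zb mid in \<open>auto simp: Zp_def\<close>)
    hence "(\<Sum>i\<in>{a + 1..b}. T i) = 0" using hb unfolding T_def by blast
    moreover have "{a + 1..b} = {a<..b}" by auto
    ultimately show ?thesis using pot_diff[of a b T] ab by simp
  qed
  define u where "u i = s i * (Pot T i - Pot T (anc Zp i))" for i
  have u0: "Zp i \<Longrightarrow> u i = 0" for i by (simp add: u_def anc_def)
  have usum: "u (i - 1) + u i = mat_trace (\<phi> i)" for i
  proof -
    have K: "Pot T (anc Zp i) = Pot T (anc Zp (i - 1))"
      by (rule anc_step) (rule key, auto)
    have si: "s i = - s (i - 1)" using neg1_powi_succ[of "i - 1", where 'a='k] by (simp add: s_def)
    have "u (i - 1) + u i = s i * (Pot T i - Pot T (i - 1))"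
      unfolding u_def K si by (simp add: algebra_simps)
    also have "\<dots> = s i * T i" using pot_step[of T i] by simp
    also have "\<dots> = mat_trace (\<phi> i)" unfolding T_def s_def
      by (simp add: mult.assoc[symmetric] neg1_powi_sq)
    finally show ?thesis .
  qed
  define pos where "pos i = (SOME ab. fst ab < n (i + 1) \<and> snd ab < n i \<and> d i $$ ab \<noteq> 0)" for i
  define hm where "hm i = (if Zp i then 0\<^sub>m (n i) (n (i + 1))
     else mat (n i) (n (i + 1)) (\<lambda>(p,q). if p = snd (pos i) \<and> q = fst (pos i) then u i / d i $$ pos i else 0))"
    for i
  have hmc: "hm i \<in> carrier_mat (n i) (n (i + 1))" for i by (simp add: hm_def)
  have hmtr: "mat_trace (hm i * d i) = u i" for i
  proof (cases "Zp i")
    case True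
    have "hm i * d i = 0\<^sub>m (n i) (n i)" using True dc[of i] by (simp add: hm_def left_mult_zero_mat)
    thus ?thesis using u0[OF True] by (simp add: mat_trace_zero)
  next
    case False
    have "\<exists>ab. fst ab < n (i + 1) \<and> snd ab < n i \<and> d i $$ ab \<noteq> 0"
    proof (rule ccontr)
      assume "\<not> ?thesis"
      hence "d i = 0\<^sub>m (n (i + 1)) (n i)" using dc[of i] by (intro eq_matI) auto
      thus False using False by (simp add: Zp_def)
    qed
    hence p: "fst (pos i) < n (i + 1) \<and> snd (pos i) < n i \<and> d i $$ pos i \<noteq> 0"
      unfolding pos_def by (rule someI_ex)
    obtain a b where ab: "pos i = (a, b)" by fastforce
    have a: "a < n (i + 1)" and b: "b < n i" and dab: "d i $$ (a,b) \<noteq> 0" using p ab by auto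
    have "mat_trace (hm i * d i) = (\<Sum>p<n i. \<Sum>q<n (i + 1). hm i $$ (p,q) * d i $$ (q,p))"
      using dc[of i] hmc[of i] by (simp add: mat_trace_def scalar_prod_def atLeast0LessThan)
    also have "\<dots> = (\<Sum>p<n i. if p = b then u i / d i $$ (a,b) * d i $$ (a,p) else 0)"
    proof (rule sum.cong[OF refl])
      fix p assume pp: "p \<in> {..<n i}"
      have "(\<Sum>q<n (i + 1). hm i $$ (p,q) * d i $$ (q,p)) =
          (\<Sum>q<n (i + 1). if q = a then (if p = b then u i / d i $$ (a,b) * d i $$ (a,p) else 0) else 0)"
        using pp False ab by (intro sum.cong) (auto simp: hm_def)
      also have "\<dots> = (if p = b then u i / d i $$ (a,b) * d i $$ (a,p) else 0)"
        using a by (simp add: sum.delta')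
      finally show "(\<Sum>q<n (i + 1). hm i $$ (p,q) * d i $$ (q,p)) =
          (if p = b then u i / d i $$ (a,b) * d i $$ (a,p) else 0)" .
    qed
    also have "\<dots> = u i" using b dab by (simp add: sum.delta')
    finally show ?thesis .
  qed
  define h where "h j = hm (j - 1)" for j
  have hc: "h j \<in> carrier_mat (n (j - 1)) (n j)" for j using hmc[of "j - 1"] by (simp add: h_def)
  have hs: "h (i + 1) = hm i" for i by (simp add: h_def)
  define \<psi> where "\<psi> i = \<phi> i - (d (i - 1) * h i + h (i + 1) * d i)" for i
  have c1: "d (i - 1) * h i \<in> carrier_mat (n i) (n i)" for i using dc[of "i - 1"] hc[of i] by auto
  have c2: "h (i + 1) * d i \<in> carrier_mat (n i) (n i)" for i using dc[of i] hc[of "i + 1"] by auto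
  have psic: "\<psi> i \<in> carrier_mat (n i) (n i)" for i using phic[of i] c1[of i] c2[of i] unfolding \<psi>_def by (intro minus_carrier_mat add_carrier_mat)
  have homot: "chain_homotopic n d \<phi> \<psi>" unfolding chain_homotopic_def
  proof (intro exI[of _ h] conjI allI)
    fix i show "h i \<in> carrier_mat (n (i - 1)) (n i)" by (rule hc)
    show "\<phi> i - \<psi> i = d (i - 1) * h i + h (i + 1) * d i"
      unfolding \<psi>_def by (rule mat_minus_minus) (use phic c1 c2 in auto)
  qed
  have chain: "is_chain_map n d \<psi>" unfolding is_chain_map_def
  proof (intro conjI allI)
    fix i show "\<psi> i \<in> carrier_mat (n i) (n i)" by (rule psic)
    let ?D = "d i" and ?D' = "d (i - 1)" and ?D2 = "d (i + 1)"
    let ?H = "hm i" and ?H' = "hm (i - 1)" and ?H2 = "hm (i + 1)"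
    have D: "?D \<in> carrier_mat (n (i + 1)) (n i)" by (rule dc)
    have D': "?D' \<in> carrier_mat (n i) (n (i - 1))" using dc[of "i - 1"] by simp
    have D2: "?D2 \<in> carrier_mat (n (i + 2)) (n (i + 1))" using dc[of "i + 1"] by (simp add: add.assoc)
    have H: "?H \<in> carrier_mat (n i) (n (i + 1))" by (rule hmc)
    have H': "?H' \<in> carrier_mat (n (i - 1)) (n i)" using hmc[of "i - 1"] by simp
    have H2: "?H2 \<in> carrier_mat (n (i + 1)) (n (i + 2))" using hmc[of "i + 1"] by (simp add: add.assoc)
    have P1: "\<phi> (i + 1) \<in> carrier_mat (n (i + 1)) (n (i + 1))" by (rule phic)
    have P0: "\<phi> i \<in> carrier_mat (n i) (n i)" by (rule phic)
    have z1: "?D2 * ?D = 0\<^sub>m (n (i + 2)) (n i)" by (rule dd)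
    have z2: "?D * ?D' = 0\<^sub>m (n (i + 1)) (n (i - 1))"
    proof -
      have e: "i - 1 + 2 = i + 1" "i - 1 + 1 = i" by simp_all
      show ?thesis using dd[of "i - 1"] unfolding e .
    qed
    have ps1: "\<psi> (i + 1) = \<phi> (i + 1) - (?D * ?H + ?H2 * ?D2)"
    proof -
      have e: "i + 1 - 1 = i" "i + 1 + 1 - 1 = i + 1" by simp_all
      show ?thesis unfolding \<psi>_def h_def e ..
    qed
    have ps0: "\<psi> i = \<phi> i - (?D' * ?H' + ?H * ?D)" unfolding \<psi>_def h_def by simp
    have "\<psi> (i + 1) * ?D = \<phi> (i + 1) * ?D - (?D * ?H + ?H2 * ?D2) * ?D"
      unfolding ps1 by (rule minus_mult_distrib_mat[OF P1 _ D]) (use D H H2 D2 in auto)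
    also have "(?D * ?H + ?H2 * ?D2) * ?D = (?D * ?H) * ?D + (?H2 * ?D2) * ?D"
      by (rule add_mult_distrib_mat[OF _ _ D]) (use D H H2 D2 in auto)
    also have "(?H2 * ?D2) * ?D = ?H2 * (?D2 * ?D)" by (rule assoc_mult_mat[OF H2 D2 D])
    also have "\<dots> = 0\<^sub>m (n (i + 1)) (n i)" unfolding z1 using H2 by (rule right_mult_zero_mat)
    also have "(?D * ?H) * ?D + 0\<^sub>m (n (i + 1)) (n i) = ?D * (?H * ?D)"
      using assoc_mult_mat[OF D H D] D H by simp
    finally have L: "\<psi> (i + 1) * ?D = \<phi> (i + 1) * ?D - ?D * (?H * ?D)" .
    have "?D * \<psi> i = ?D * \<phi> i - ?D * (?D' * ?H' + ?H * ?D)"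
      unfolding ps0 by (rule mult_minus_distrib_mat[OF D P0]) (use D' H' H D in auto)
    also have "?D * (?D' * ?H' + ?H * ?D) = ?D * (?D' * ?H') + ?D * (?H * ?D)"
      by (rule mult_add_distrib_mat[OF D]) (use D' H' H D in auto)
    also have "?D * (?D' * ?H') = (?D * ?D') * ?H'" by (rule assoc_mult_mat[OF D D' H', symmetric])
    also have "\<dots> = 0\<^sub>m (n (i + 1)) (n i)" unfolding z2 using H' by (rule left_mult_zero_mat)
    also have "0\<^sub>m (n (i + 1)) (n i) + ?D * (?H * ?D) = ?D * (?H * ?D)"
      using D H by simp
    finally have R: "?D * \<psi> i = ?D * \<phi> i - ?D * (?H * ?D)" .
    show "\<psi> (i + 1) * d i = d i * \<psi> i" unfolding L R phid ..
  qed
  have pcomm: "pointwise_commutator n \<psi>" unfolding pointwise_commutator_def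
  proof
    fix i
    have "mat_trace (\<psi> i) = mat_trace (\<phi> i) - mat_trace (d (i - 1) * h i + h (i + 1) * d i)"
      unfolding \<psi>_def by (rule mat_trace_minus) (use phic c1 c2 in auto)
    also have "mat_trace (d (i - 1) * h i + h (i + 1) * d i) = mat_trace (d (i - 1) * h i) + mat_trace (h (i + 1) * d i)"
      by (rule mat_trace_add[OF c1 c2])
    also have "mat_trace (d (i - 1) * h i) = mat_trace (h i * d (i - 1))"
      by (rule mat_trace_comm) (use dc[of "i - 1"] hc[of i] in auto)
    also have "h i * d (i - 1) = hm (i - 1) * d (i - 1)" by (simp add: h_def)
    also have "mat_trace \<dots> = u (i - 1)" by (rule hmtr)
    also have "mat_trace (h (i + 1) * d i) = u i" unfolding hs by (rule hmtr)
    finally have "mat_trace (\<psi> i) = 0" using usum[of i] by simp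
    thus "is_commutator (n i) (\<psi> i)" by (rule AM[OF psic])
  qed
  show ?thesis using chain pcomm homot by blast
qed


definition subsp :: "nat \<Rightarrow> 'a::field vec set \<Rightarrow> bool" where
  "subsp m U \<longleftrightarrow> U \<subseteq> carrier_vec m \<and> 0\<^sub>v m \<in> U \<and> (\<forall>x\<in>U. \<forall>y\<in>U. x + y \<in> U) \<and> (\<forall>c. \<forall>x\<in>U. c \<cdot>\<^sub>v x \<in> U)"

lemma subspD:
  assumes "subsp m U"
  shows "U \<subseteq> carrier_vec m" "0\<^sub>v m \<in> U" "\<And>x y. x \<in> U \<Longrightarrow> y \<in> U \<Longrightarrow> x + y \<in> U"
    "\<And>c x. x \<in> U \<Longrightarrow> c \<cdot>\<^sub>v x \<in> U"
  using assms unfolding subsp_def by auto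

lemma subsp_minus:
  assumes U: "subsp m U" and x: "x \<in> U" and y: "y \<in> U"
  shows "x - y \<in> U"
proof -
  have xc: "x \<in> carrier_vec m" and yc: "y \<in> carrier_vec m" using subspD(1)[OF U] x y by auto
  have "x - y = x + (-1) \<cdot>\<^sub>v y" by (rule eq_vecI) (use xc yc in auto)
  thus ?thesis using subspD(3,4)[OF U] x y by auto
qed

lemma vtrans:
  assumes U: "subsp m U" and c: "x \<in> carrier_vec m" "y \<in> carrier_vec m" "z \<in> carrier_vec m"
    and "x - y \<in> U" "y - z \<in> U"
  shows "x - z \<in> U"
proof -
  have "x - z = (x - y) + (y - z)" by (rule eq_vecI) (use c in auto)
  thus ?thesis using subspD(3)[OF U] assms by auto
qed

lemma vsym:
  assumes U: "subsp m U" and c: "x \<in> carrier_vec m" "y \<in> carrier_vec m" and "x - y \<in> U"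
  shows "y - x \<in> U"
proof -
  have "y - x = (-1) \<cdot>\<^sub>v (x - y)" by (rule eq_vecI) (use c in auto)
  thus ?thesis using subspD(4)[OF U] assms by auto
qed

lemma vAmap:
  fixes A :: "'a::field mat"
  assumes U: "subsp m U" and A: "A \<in> carrier_mat m m" and AU: "\<forall>u\<in>U. A *\<^sub>v u \<in> U"
    and c: "x \<in> carrier_vec m" "y \<in> carrier_vec m" and "x - y \<in> U"
  shows "A *\<^sub>v x - A *\<^sub>v y \<in> U"
proof -
  have "A *\<^sub>v x - A *\<^sub>v y = A *\<^sub>v (x - y)" by (rule mult_minus_distrib_mat_vec[symmetric, OF A c])
  thus ?thesis using AU assms by auto
qed

lemma mat_split_last:
  fixes B :: "'a::comm_ring_1 mat"
  assumes B: "B \<in> carrier_mat m (Suc r)" and a: "a \<in> carrier_vec (Suc r)"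
  shows "B *\<^sub>v a = mat m r (\<lambda>(i,j). B $$ (i,j)) *\<^sub>v vec r (\<lambda>i. a $ i) + a $ r \<cdot>\<^sub>v col B r"
proof (rule eq_vecI)
  fix i assume "i < dim_vec (mat m r (\<lambda>(i,j). B $$ (i,j)) *\<^sub>v vec r (\<lambda>i. a $ i) + a $ r \<cdot>\<^sub>v col B r)"
  hence i: "i < m" using B by simp
  have "(B *\<^sub>v a) $ i = (\<Sum>j<Suc r. B $$ (i,j) * a $ j)"
    using i B a by (simp add: scalar_prod_def atLeast0LessThan)
  also have "\<dots> = (\<Sum>j<r. B $$ (i,j) * a $ j) + B $$ (i,r) * a $ r" by simp
  finally show "(B *\<^sub>v a) $ i = (mat m r (\<lambda>(i,j). B $$ (i,j)) *\<^sub>v vec r (\<lambda>i. a $ i) + a $ r \<cdot>\<^sub>v col B r) $ i"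
    using i B by (simp add: scalar_prod_def atLeast0LessThan mult.commute)
qed (use B in simp)

lemma lincomb_in:
  fixes B :: "'a::field mat"
  assumes U: "subsp m U"
  shows "B \<in> carrier_mat m r \<Longrightarrow> (\<And>j. j < r \<Longrightarrow> col B j \<in> U) \<Longrightarrow> a \<in> carrier_vec r \<Longrightarrow> B *\<^sub>v a \<in> U"
proof (induction r arbitrary: B a)
  case 0
  have "B *\<^sub>v a = 0\<^sub>v m" using 0 by (intro eq_vecI) (auto simp: scalar_prod_def)
  thus ?case using subspD(2)[OF U] by simp
next
  case (Suc r)
  let ?B' = "mat m r (\<lambda>(i,j). B $$ (i,j))"
  have "?B' *\<^sub>v vec r (\<lambda>i. a $ i) \<in> U"
  proof (rule Suc.IH)
    fix j assume j: "j < r"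
    have "col ?B' j = col B j" using j Suc.prems(1) by (intro eq_vecI) auto
    thus "col ?B' j \<in> U" using Suc.prems(2) j by simp
  qed auto
  moreover have "a $ r \<cdot>\<^sub>v col B r \<in> U" using Suc.prems(2) subspD(4)[OF U] by simp
  ultimately show ?case using mat_split_last[OF Suc.prems(1,3)] subspD(3)[OF U] by simp
qed

lemma lincomb_in':
  fixes B :: "'a::field mat"
  assumes U: "subsp m U" and B: "B \<in> carrier_mat m r"
    and cols: "\<And>j. j < r \<Longrightarrow> B *\<^sub>v unit_vec r j \<in> U" and a: "a \<in> carrier_vec r"
  shows "B *\<^sub>v a \<in> U"
  by (rule lincomb_in[OF U B _ a]) (use cols mat_vec_unit[OF B] in auto)

definition qrep :: "nat \<Rightarrow> 'a::field mat \<Rightarrow> 'a vec set \<Rightarrow> 'a vec set \<Rightarrow> nat \<Rightarrow> 'a mat \<Rightarrow> 'a mat \<Rightarrow> bool" where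
  "qrep m A W U r B C \<longleftrightarrow> B \<in> carrier_mat m r \<and> C \<in> carrier_mat r r \<and>
      (\<forall>a \<in> carrier_vec r. B *\<^sub>v a \<in> W) \<and>
      (\<forall>w \<in> W. \<exists>a \<in> carrier_vec r. w - B *\<^sub>v a \<in> U) \<and>
      (\<forall>a \<in> carrier_vec r. B *\<^sub>v a \<in> U \<longrightarrow> a = 0\<^sub>v r) \<and>
      (\<forall>a \<in> carrier_vec r. A *\<^sub>v (B *\<^sub>v a) - B *\<^sub>v (C *\<^sub>v a) \<in> U)"

definition good :: "nat \<Rightarrow> 'a::field mat \<Rightarrow> 'a vec set \<Rightarrow> 'a vec set \<Rightarrow> bool" where
  "good m A W U \<longleftrightarrow> A \<in> carrier_mat m m \<and> subsp m W \<and> subsp m U \<and> U \<subseteq> W \<and>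
     (\<forall>w\<in>W. A *\<^sub>v w \<in> W) \<and> (\<forall>u\<in>U. A *\<^sub>v u \<in> U)"

lemma transfer_mat:
  fixes B B' :: "'a::field mat"
  assumes U: "subsp m U" and B: "B \<in> carrier_mat m r" and B': "B' \<in> carrier_mat m r'"
    and ex: "\<And>j. j < r \<Longrightarrow> \<exists>a'\<in>carrier_vec r'. B *\<^sub>v unit_vec r j - B' *\<^sub>v a' \<in> U"
  shows "\<exists>P. P \<in> carrier_mat r' r \<and> (\<forall>a\<in>carrier_vec r. B *\<^sub>v a - B' *\<^sub>v (P *\<^sub>v a) \<in> U)"
proof -
  define f where "f j = (SOME a'. a' \<in> carrier_vec r' \<and> B *\<^sub>v unit_vec r j - B' *\<^sub>v a' \<in> U)" for j
  have f: "f j \<in> carrier_vec r' \<and> B *\<^sub>v unit_vec r j - B' *\<^sub>v f j \<in> U" if "j < r" for j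
    unfolding f_def by (rule someI_ex) (use ex[OF that] in auto)
  define P where "P = mat r' r (\<lambda>(i,j). f j $ i)"
  have Pc: "P \<in> carrier_mat r' r" by (simp add: P_def)
  have colP: "P *\<^sub>v unit_vec r j = f j" if "j < r" for j
    using mat_vec_unit[OF Pc that] f[OF that] that by (auto simp: P_def)
  have "(B - B' * P) *\<^sub>v a \<in> U" if a: "a \<in> carrier_vec r" for a
  proof (rule lincomb_in'[OF U _ _ a])
    show "B - B' * P \<in> carrier_mat m r" using B B' Pc by auto
    fix j assume j: "j < r"
    have "(B - B' * P) *\<^sub>v unit_vec r j = B *\<^sub>v unit_vec r j - (B' * P) *\<^sub>v unit_vec r j"
      by (rule minus_mult_distrib_mat_vec) (use B B' Pc in auto)
    also have "(B' * P) *\<^sub>v unit_vec r j = B' *\<^sub>v f j" using assoc_mult_mat_vec[OF B' Pc, of "unit_vec r j"] colP[OF j] by simp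
    finally show "(B - B' * P) *\<^sub>v unit_vec r j \<in> U" using f[OF j] by simp
  qed
  moreover have "(B - B' * P) *\<^sub>v a = B *\<^sub>v a - B' *\<^sub>v (P *\<^sub>v a)" if a: "a \<in> carrier_vec r" for a
  proof -
    have "(B - B' * P) *\<^sub>v a = B *\<^sub>v a - (B' * P) *\<^sub>v a"
      by (rule minus_mult_distrib_mat_vec) (use B B' Pc a in auto)
    thus ?thesis using assoc_mult_mat_vec[OF B' Pc a] by simp
  qed
  ultimately show ?thesis using Pc by auto
qed


lemma vec_eq_from_diff:
  assumes "x \<in> carrier_vec m" "y \<in> carrier_vec m" "x - y = 0\<^sub>v m"
  shows "x = (y :: 'a::comm_ring_1 vec)"
proof (rule eq_vecI)
  fix i assume i: "i < dim_vec y"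
  have "(x - y) $ i = 0" using assms(3) i assms(2) by simp
  thus "x $ i = y $ i" using i assms(1,2) by simp
qed (use assms in simp)

lemma mat_eq_by_vec:
  fixes C D :: "'a::comm_ring_1 mat"
  assumes C: "C \<in> carrier_mat r c" and D: "D \<in> carrier_mat r c"
    and e: "\<And>a. a \<in> carrier_vec c \<Longrightarrow> C *\<^sub>v a = D *\<^sub>v a"
  shows "C = D"
proof (rule eq_matI)
  fix i j assume i: "i < dim_row D" and j: "j < dim_col D"
  have "C *\<^sub>v unit_vec c j = D *\<^sub>v unit_vec c j" using e j D by simp
  hence "col C j = col D j" using mat_vec_unit[OF C] mat_vec_unit[OF D] j D by simp
  thus "C $$ (i,j) = D $$ (i,j)" using i j C D by (metis carrier_matD col_def index_vec)
qed (use C D in auto)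

lemma qrep_unique:
  fixes A :: "'a::field mat"
  assumes g: "good m A W U" and q1: "qrep m A W U r B C" and q2: "qrep m A W U r' B' C'"
  shows "mat_trace C = mat_trace C'"
proof -
  have A: "A \<in> carrier_mat m m" and W: "subsp m W" and U: "subsp m U" and UW: "U \<subseteq> W"
    and AU: "\<forall>u\<in>U. A *\<^sub>v u \<in> U" using g unfolding good_def by auto
  have B: "B \<in> carrier_mat m r" and C: "C \<in> carrier_mat r r" and BW: "\<forall>a\<in>carrier_vec r. B *\<^sub>v a \<in> W"
    and Bsp: "\<forall>w\<in>W. \<exists>a\<in>carrier_vec r. w - B *\<^sub>v a \<in> U"
    and Bin: "\<forall>a\<in>carrier_vec r. B *\<^sub>v a \<in> U \<longrightarrow> a = 0\<^sub>v r"
    and BC: "\<forall>a\<in>carrier_vec r. A *\<^sub>v (B *\<^sub>v a) - B *\<^sub>v (C *\<^sub>v a) \<in> U"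
    using q1 unfolding qrep_def by auto
  have B': "B' \<in> carrier_mat m r'" and C': "C' \<in> carrier_mat r' r'" and BW': "\<forall>a\<in>carrier_vec r'. B' *\<^sub>v a \<in> W"
    and Bsp': "\<forall>w\<in>W. \<exists>a\<in>carrier_vec r'. w - B' *\<^sub>v a \<in> U"
    and Bin': "\<forall>a\<in>carrier_vec r'. B' *\<^sub>v a \<in> U \<longrightarrow> a = 0\<^sub>v r'"
    and BC': "\<forall>a\<in>carrier_vec r'. A *\<^sub>v (B' *\<^sub>v a) - B' *\<^sub>v (C' *\<^sub>v a) \<in> U"
    using q2 unfolding qrep_def by auto
  obtain P where P: "P \<in> carrier_mat r' r" and PB: "\<forall>a\<in>carrier_vec r. B *\<^sub>v a - B' *\<^sub>v (P *\<^sub>v a) \<in> U"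
    using transfer_mat[OF U B B'] BW Bsp' by (meson unit_vec_carrier)
  obtain Q where Q: "Q \<in> carrier_mat r r'" and QB: "\<forall>a\<in>carrier_vec r'. B' *\<^sub>v a - B *\<^sub>v (Q *\<^sub>v a) \<in> U"
    using transfer_mat[OF U B' B] BW' Bsp by (meson unit_vec_carrier)
  have CQ: "C = Q * C' * P"
  proof (rule mat_eq_by_vec[OF C])
    show "Q * C' * P \<in> carrier_mat r r" using Q C' P by auto
    fix a :: "'a vec" assume a: "a \<in> carrier_vec r"
    let ?x = "P *\<^sub>v a" let ?y = "C' *\<^sub>v ?x"
    have xc: "?x \<in> carrier_vec r'" using P a by simp
    have yc: "?y \<in> carrier_vec r'" using C' xc by simp
    have c1: "B *\<^sub>v (C *\<^sub>v a) \<in> carrier_vec m" "A *\<^sub>v (B *\<^sub>v a) \<in> carrier_vec m"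
      "A *\<^sub>v (B' *\<^sub>v ?x) \<in> carrier_vec m" "B' *\<^sub>v ?y \<in> carrier_vec m" "B *\<^sub>v (Q *\<^sub>v ?y) \<in> carrier_vec m"
      "B *\<^sub>v a \<in> carrier_vec m" "B' *\<^sub>v ?x \<in> carrier_vec m"
      using A B B' C Q a xc yc by auto
    have t1: "B *\<^sub>v (C *\<^sub>v a) - A *\<^sub>v (B *\<^sub>v a) \<in> U" by (rule vsym[OF U]) (use c1 BC a in auto)
    have t2: "A *\<^sub>v (B *\<^sub>v a) - A *\<^sub>v (B' *\<^sub>v ?x) \<in> U" by (rule vAmap[OF U A AU]) (use c1 PB a in auto)
    have t3: "A *\<^sub>v (B' *\<^sub>v ?x) - B' *\<^sub>v ?y \<in> U" using BC' xc by auto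
    have t4: "B' *\<^sub>v ?y - B *\<^sub>v (Q *\<^sub>v ?y) \<in> U" using QB yc by auto
    have "B *\<^sub>v (C *\<^sub>v a) - B *\<^sub>v (Q *\<^sub>v ?y) \<in> U"
      using vtrans[OF U _ _ _ vtrans[OF U _ _ _ vtrans[OF U _ _ _ t1 t2] t3] t4] c1 by auto
    moreover have "B *\<^sub>v (C *\<^sub>v a) - B *\<^sub>v (Q *\<^sub>v ?y) = B *\<^sub>v (C *\<^sub>v a - Q *\<^sub>v ?y)"
      by (rule mult_minus_distrib_mat_vec[symmetric, OF B]) (use C Q a yc in auto)
    ultimately have "C *\<^sub>v a - Q *\<^sub>v ?y = 0\<^sub>v r" using Bin C Q a yc by auto
    hence "C *\<^sub>v a = Q *\<^sub>v ?y" using vec_eq_from_diff[of "C *\<^sub>v a" r "Q *\<^sub>v ?y"] C Q a yc by auto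
    also have "Q *\<^sub>v ?y = (Q * C' * P) *\<^sub>v a"
    proof -
      have 1: "(Q * C' * P) *\<^sub>v a = (Q * C') *\<^sub>v (P *\<^sub>v a)"
        by (rule assoc_mult_mat_vec) (use Q C' P a in auto)
      have 2: "(Q * C') *\<^sub>v (P *\<^sub>v a) = Q *\<^sub>v (C' *\<^sub>v (P *\<^sub>v a))"
        by (rule assoc_mult_mat_vec) (use Q C' xc in auto)
      show ?thesis using 1 2 by simp
    qed
    finally show "C *\<^sub>v a = (Q * C' * P) *\<^sub>v a" .
  qed
  have PQ: "P * Q = 1\<^sub>m r'"
  proof (rule mat_eq_by_vec)
    show "P * Q \<in> carrier_mat r' r'" "1\<^sub>m r' \<in> carrier_mat r' r'" using P Q by auto
    fix a :: "'a vec" assume a: "a \<in> carrier_vec r'"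
    let ?z = "P *\<^sub>v (Q *\<^sub>v a)"
    have zc: "?z \<in> carrier_vec r'" "Q *\<^sub>v a \<in> carrier_vec r" using P Q a by auto
    have "B' *\<^sub>v a - B' *\<^sub>v ?z \<in> U"
      by (rule vtrans[OF U _ _ _ _ PB[rule_format, OF zc(2)]]) (use QB a B B' zc in auto)
    moreover have "B' *\<^sub>v a - B' *\<^sub>v ?z = B' *\<^sub>v (a - ?z)"
      by (rule mult_minus_distrib_mat_vec[symmetric, OF B']) (use a zc in auto)
    ultimately have "a - ?z = 0\<^sub>v r'" using Bin' a zc by auto
    hence "a = ?z" using vec_eq_from_diff[of a r' ?z] a zc by auto
    thus "(P * Q) *\<^sub>v a = 1\<^sub>m r' *\<^sub>v a" using assoc_mult_mat_vec[OF P Q a] a by simp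
  qed
  have "mat_trace C = mat_trace ((Q * C') * P)" using CQ by simp
  also have "\<dots> = mat_trace (P * (Q * C'))" by (rule mat_trace_comm) (use Q C' P in auto)
  also have "P * (Q * C') = (P * Q) * C'" using P Q C' by simp
  also have "\<dots> = C'" using PQ C' by simp
  finally show ?thesis .
qed

lemma quot_trace_eq:
  fixes A :: "'a::field mat"
  assumes g: "good m A W U" and q: "qrep m A W U r B C"
  shows "quot_trace m A W U = mat_trace C"
proof -
  have "quot_trace m A W U = (THE t. \<exists>r B C. qrep m A W U r B C \<and> t = mat_trace C)"
    unfolding quot_trace_def qrep_def by (simp add: conj_assoc)
  also have "\<dots> = mat_trace C"
  proof (rule the_equality)
    show "\<exists>r' B' C'. qrep m A W U r' B' C' \<and> mat_trace C = mat_trace C'" using q by blast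
    fix t assume "\<exists>r' B' C'. qrep m A W U r' B' C' \<and> t = mat_trace C'"
    then obtain r' B' C' where "qrep m A W U r' B' C'" "t = mat_trace C'" by blast
    thus "t = mat_trace C" using qrep_unique[OF g q] by simp
  qed
  finally show ?thesis .
qed


lemma qrep_exists:
  fixes A :: "'a::field mat"
  assumes g: "good m A W U"
  shows "\<exists>r B C. qrep m A W U r B C"
proof -
  have A: "A \<in> carrier_mat m m" and W: "subsp m W" and U: "subsp m U" and UW: "U \<subseteq> W"
    and AW: "\<forall>w\<in>W. A *\<^sub>v w \<in> W" and AU: "\<forall>u\<in>U. A *\<^sub>v u \<in> U" using g unfolding good_def by auto
  define R where "R r \<longleftrightarrow> (\<exists>B. B \<in> carrier_mat m r \<and> (\<forall>a\<in>carrier_vec r. B *\<^sub>v a \<in> W) \<and>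
      (\<forall>a\<in>carrier_vec r. B *\<^sub>v a \<in> U \<longrightarrow> a = 0\<^sub>v r))" for r
  have R0: "R 0" unfolding R_def
  proof (intro exI[of _ "0\<^sub>m m 0"] conjI ballI impI)
    fix a :: "'a vec" assume a: "a \<in> carrier_vec 0"
    have "0\<^sub>m m 0 *\<^sub>v a = 0\<^sub>v m" using a by (intro eq_vecI) (auto simp: scalar_prod_def)
    thus "0\<^sub>m m 0 *\<^sub>v a \<in> W" using subspD(2)[OF W] by simp
    show "a = 0\<^sub>v 0" using a by auto
  qed auto
  have Rb: "R r \<Longrightarrow> r \<le> m" for r
  proof -
    assume "R r"
    then obtain B where B: "B \<in> carrier_mat m r" and inj: "\<forall>a\<in>carrier_vec r. B *\<^sub>v a \<in> U \<longrightarrow> a = 0\<^sub>v r"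
      unfolding R_def by blast
    show "r \<le> m" by (rule inj_le[OF B]) (use inj subspD(2)[OF U] in auto)
  qed
  define r0 where "r0 = (GREATEST r. R r)"
  have Rr0: "R r0" unfolding r0_def by (rule GreatestI_nat[of R 0 m]) (use R0 Rb in auto)
  have r0max: "R r \<Longrightarrow> r \<le> r0" for r unfolding r0_def by (rule Greatest_le_nat[of R r m]) (use Rb in auto)
  obtain B where B: "B \<in> carrier_mat m r0" and BW: "\<forall>a\<in>carrier_vec r0. B *\<^sub>v a \<in> W"
    and Bin: "\<forall>a\<in>carrier_vec r0. B *\<^sub>v a \<in> U \<longrightarrow> a = 0\<^sub>v r0" using Rr0 unfolding R_def by blast
  have span: "\<forall>w\<in>W. \<exists>a\<in>carrier_vec r0. w - B *\<^sub>v a \<in> U"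
  proof (rule ccontr)
    assume "\<not> ?thesis"
    then obtain w where w: "w \<in> W" and nw: "\<And>a. a \<in> carrier_vec r0 \<Longrightarrow> w - B *\<^sub>v a \<notin> U" by blast
    have wc: "w \<in> carrier_vec m" using w subspD(1)[OF W] by auto
    define B2 where "B2 = mat m (Suc r0) (\<lambda>(i,j). if j < r0 then B $$ (i,j) else w $ i)"
    have B2c: "B2 \<in> carrier_mat m (Suc r0)" by (simp add: B2_def)
    have Bpart: "mat m r0 (\<lambda>(i,j). B2 $$ (i,j)) = B" using B by (intro eq_matI) (auto simp: B2_def)
    have colw: "col B2 r0 = w" using wc by (intro eq_vecI) (auto simp: B2_def)
    have split: "B2 *\<^sub>v a = B *\<^sub>v vec r0 (\<lambda>i. a $ i) + a $ r0 \<cdot>\<^sub>v w" if "a \<in> carrier_vec (Suc r0)" for a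
      using mat_split_last[OF B2c that] Bpart colw by simp
    have "R (Suc r0)" unfolding R_def
    proof (intro exI[of _ B2] conjI ballI impI)
      show "B2 \<in> carrier_mat m (Suc r0)" by (rule B2c)
      fix a :: "'a vec" assume a: "a \<in> carrier_vec (Suc r0)"
      let ?a' = "vec r0 (\<lambda>i. a $ i)"
      have a'c: "?a' \<in> carrier_vec r0" by simp
      show "B2 *\<^sub>v a \<in> W" unfolding split[OF a]
        using subspD(3)[OF W BW[rule_format, OF a'c] subspD(4)[OF W w]] by simp
      assume inU: "B2 *\<^sub>v a \<in> U"
      have c0: "a $ r0 = 0"
      proof (rule ccontr)
        assume c: "a $ r0 \<noteq> 0"
        let ?c = "a $ r0"
        let ?b = "(- inverse ?c) \<cdot>\<^sub>v ?a'"
        have bc: "?b \<in> carrier_vec r0" by simp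
        have "w - B *\<^sub>v ?b = inverse ?c \<cdot>\<^sub>v (B2 *\<^sub>v a)"
        proof (rule eq_vecI)
          fix i assume "i < dim_vec (inverse ?c \<cdot>\<^sub>v (B2 *\<^sub>v a))" hence i: "i < m" using B2c by simp
          have "(B *\<^sub>v ?b) $ i = (- inverse ?c) * (B *\<^sub>v ?a') $ i" using i B by (simp add: mult_mat_vec)
          moreover have "(B2 *\<^sub>v a) $ i = (B *\<^sub>v ?a') $ i + ?c * w $ i" using split[OF a] i B wc by simp
          ultimately show "(w - B *\<^sub>v ?b) $ i = (inverse ?c \<cdot>\<^sub>v (B2 *\<^sub>v a)) $ i"
            using i B wc B2c c by (simp add: field_simps)
        qed (use B2c wc B in simp)
        hence "w - B *\<^sub>v ?b \<in> U" using subspD(4)[OF U inU] by simp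
        thus False using nw[OF bc] by simp
      qed
      have "B2 *\<^sub>v a = B *\<^sub>v ?a'"
      proof -
        have "a $ r0 \<cdot>\<^sub>v w = 0\<^sub>v m" using c0 wc by (intro eq_vecI) auto
        thus ?thesis using split[OF a] B by simp
      qed
      hence "?a' = 0\<^sub>v r0" using Bin inU by auto
      show "a = 0\<^sub>v (Suc r0)"
      proof (rule eq_vecI)
        fix i assume "i < dim_vec (0\<^sub>v (Suc r0) :: 'a vec)" hence i: "i < Suc r0" by simp
        show "a $ i = 0\<^sub>v (Suc r0) $ i"
        proof (cases "i = r0")
          case True thus ?thesis using c0 by simp
        next
          case False hence "i < r0" using i by simp
          thus ?thesis using arg_cong[OF \<open>?a' = 0\<^sub>v r0\<close>, of "\<lambda>v. v $ i"] by simp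
        qed
      qed (use a in simp)
    qed
    from r0max[OF this] show False by simp
  qed
  have AB: "A * B \<in> carrier_mat m r0" using A B by simp
  obtain C where C: "C \<in> carrier_mat r0 r0" and ACB: "\<forall>a\<in>carrier_vec r0. (A * B) *\<^sub>v a - B *\<^sub>v (C *\<^sub>v a) \<in> U"
  proof -
    have "\<exists>P. P \<in> carrier_mat r0 r0 \<and> (\<forall>a\<in>carrier_vec r0. (A * B) *\<^sub>v a - B *\<^sub>v (P *\<^sub>v a) \<in> U)"
    proof (rule transfer_mat[OF U AB B])
      fix j assume j: "j < r0"
      have "(A * B) *\<^sub>v unit_vec r0 j = A *\<^sub>v (B *\<^sub>v unit_vec r0 j)"
        using assoc_mult_mat_vec[OF A B, of "unit_vec r0 j"] by simp
      moreover have "A *\<^sub>v (B *\<^sub>v unit_vec r0 j) \<in> W" using AW BW by simp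
      ultimately show "\<exists>a'\<in>carrier_vec r0. (A * B) *\<^sub>v unit_vec r0 j - B *\<^sub>v a' \<in> U" using span by simp
    qed
    thus ?thesis using that by blast
  qed
  have "qrep m A W U r0 B C" unfolding qrep_def
  proof (intro conjI)
    show "\<forall>a\<in>carrier_vec r0. A *\<^sub>v (B *\<^sub>v a) - B *\<^sub>v (C *\<^sub>v a) \<in> U"
      using ACB assoc_mult_mat_vec[OF A B] by simp
  qed (use B C BW span Bin in auto)
  thus ?thesis by blast
qed


lemma sum_split_add: fixes a b :: nat and f :: "nat \<Rightarrow> 'a::comm_monoid_add"
  shows "(\<Sum>j<a+b. f j) = (\<Sum>j<a. f j) + (\<Sum>j<b. f (a + j))"
  by (induction b) (simp_all add: add.assoc)

lemma vec_split_app: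
  assumes "a \<in> carrier_vec (p + q)"
  shows "a = vec p (\<lambda>i. a $ i) @\<^sub>v vec q (\<lambda>i. a $ (p + i))"
  by (rule eq_vecI) (use assms in auto)

definition hcat :: "nat \<Rightarrow> 'a mat \<Rightarrow> 'a mat \<Rightarrow> 'a mat" where
  "hcat m B2 B1 = mat m (dim_col B2 + dim_col B1) (\<lambda>(i,j). if j < dim_col B2 then B2 $$ (i,j) else B1 $$ (i, j - dim_col B2))"

lemma hcat_carrier: "B2 \<in> carrier_mat m p \<Longrightarrow> B1 \<in> carrier_mat m q \<Longrightarrow> hcat m B2 B1 \<in> carrier_mat m (p + q)"
  by (simp add: hcat_def)

lemma hcat_mult:
  fixes B2 B1 :: "'a::comm_ring_1 mat"
  assumes B2: "B2 \<in> carrier_mat m p" and B1: "B1 \<in> carrier_mat m q"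
    and v: "v \<in> carrier_vec p" and w: "w \<in> carrier_vec q"
  shows "hcat m B2 B1 *\<^sub>v (v @\<^sub>v w) = B2 *\<^sub>v v + B1 *\<^sub>v w"
proof (rule eq_vecI)
  fix i assume "i < dim_vec (B2 *\<^sub>v v + B1 *\<^sub>v w)" hence i: "i < m" using B1 by simp
  have "(hcat m B2 B1 *\<^sub>v (v @\<^sub>v w)) $ i = (\<Sum>j<p+q. hcat m B2 B1 $$ (i,j) * (v @\<^sub>v w) $ j)"
    using i B2 B1 v w by (simp add: hcat_def scalar_prod_def atLeast0LessThan)
  also have "\<dots> = (\<Sum>j<p. B2 $$ (i,j) * v $ j) + (\<Sum>j<q. B1 $$ (i,j) * w $ j)"
    unfolding sum_split_add using i B2 B1 v w by (simp add: hcat_def)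
  finally show "(hcat m B2 B1 *\<^sub>v (v @\<^sub>v w)) $ i = (B2 *\<^sub>v v + B1 *\<^sub>v w) $ i"
    using i B2 B1 v w by (simp add: scalar_prod_def atLeast0LessThan)
qed (use B2 B1 in \<open>simp add: hcat_def\<close>)

lemma qt_add:
  fixes A :: "'a::field mat"
  assumes g1: "good m A W X" and g2: "good m A X U" and g: "good m A W U"
  shows "quot_trace m A W U = quot_trace m A W X + quot_trace m A X U"
proof -
  have A: "A \<in> carrier_mat m m" and Wsp: "subsp m W" and Xsp: "subsp m X" and Usp: "subsp m U"
    and UX: "U \<subseteq> X" and XW: "X \<subseteq> W" and AU: "\<forall>u\<in>U. A *\<^sub>v u \<in> U"
    using g1 g2 unfolding good_def by auto
  obtain r1 B1 C1 where q1: "qrep m A W X r1 B1 C1" using qrep_exists[OF g1] by blast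
  obtain r2 B2 C2 where q2: "qrep m A X U r2 B2 C2" using qrep_exists[OF g2] by blast
  have B1: "B1 \<in> carrier_mat m r1" and C1: "C1 \<in> carrier_mat r1 r1" and B1W: "\<forall>a\<in>carrier_vec r1. B1 *\<^sub>v a \<in> W"
    and sp1: "\<forall>w\<in>W. \<exists>a\<in>carrier_vec r1. w - B1 *\<^sub>v a \<in> X"
    and in1: "\<forall>a\<in>carrier_vec r1. B1 *\<^sub>v a \<in> X \<longrightarrow> a = 0\<^sub>v r1"
    and BC1: "\<forall>a\<in>carrier_vec r1. A *\<^sub>v (B1 *\<^sub>v a) - B1 *\<^sub>v (C1 *\<^sub>v a) \<in> X"
    using q1 unfolding qrep_def by auto
  have B2: "B2 \<in> carrier_mat m r2" and C2: "C2 \<in> carrier_mat r2 r2" and B2X: "\<forall>a\<in>carrier_vec r2. B2 *\<^sub>v a \<in> X"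
    and sp2: "\<forall>w\<in>X. \<exists>a\<in>carrier_vec r2. w - B2 *\<^sub>v a \<in> U"
    and in2: "\<forall>a\<in>carrier_vec r2. B2 *\<^sub>v a \<in> U \<longrightarrow> a = 0\<^sub>v r2"
    and BC2: "\<forall>a\<in>carrier_vec r2. A *\<^sub>v (B2 *\<^sub>v a) - B2 *\<^sub>v (C2 *\<^sub>v a) \<in> U"
    using q2 unfolding qrep_def by auto
  let ?G = "A * B1 - B1 * C1"
  have Gc: "?G \<in> carrier_mat m r1" using A B1 C1 by auto
  have Gv: "?G *\<^sub>v a = A *\<^sub>v (B1 *\<^sub>v a) - B1 *\<^sub>v (C1 *\<^sub>v a)" if "a \<in> carrier_vec r1" for a
  proof -
    have "?G *\<^sub>v a = (A * B1) *\<^sub>v a - (B1 * C1) *\<^sub>v a"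
      by (rule minus_mult_distrib_mat_vec) (use A B1 C1 that in auto)
    thus ?thesis using assoc_mult_mat_vec[OF A B1 that] assoc_mult_mat_vec[OF B1 C1 that] by simp
  qed
  obtain E where E: "E \<in> carrier_mat r2 r1" and GE: "\<forall>a\<in>carrier_vec r1. ?G *\<^sub>v a - B2 *\<^sub>v (E *\<^sub>v a) \<in> U"
  proof -
    have "\<exists>P. P \<in> carrier_mat r2 r1 \<and> (\<forall>a\<in>carrier_vec r1. ?G *\<^sub>v a - B2 *\<^sub>v (P *\<^sub>v a) \<in> U)"
    proof (rule transfer_mat[OF Usp Gc B2])
      fix j assume j: "j < r1"
      have "?G *\<^sub>v unit_vec r1 j \<in> X" using Gv[of "unit_vec r1 j"] BC1 by simp
      thus "\<exists>a'\<in>carrier_vec r2. ?G *\<^sub>v unit_vec r1 j - B2 *\<^sub>v a' \<in> U" using sp2 by blast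
    qed
    thus ?thesis using that by blast
  qed
  define B where "B = hcat m B2 B1"
  define C where "C = four_block_mat C2 E (0\<^sub>m r1 r2) C1"
  have Bc: "B \<in> carrier_mat m (r2 + r1)" unfolding B_def by (rule hcat_carrier[OF B2 B1])
  have Cc: "C \<in> carrier_mat (r2 + r1) (r2 + r1)" unfolding C_def using C2 C1 by auto
  have Bapp: "B *\<^sub>v (v @\<^sub>v w) = B2 *\<^sub>v v + B1 *\<^sub>v w" if "v \<in> carrier_vec r2" "w \<in> carrier_vec r1" for v w
    unfolding B_def by (rule hcat_mult[OF B2 B1 that])
  have Capp: "C *\<^sub>v (v @\<^sub>v w) = (C2 *\<^sub>v v + E *\<^sub>v w) @\<^sub>v (C1 *\<^sub>v w)" if v: "v \<in> carrier_vec r2" and w: "w \<in> carrier_vec r1" for v w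
  proof -
    have "C *\<^sub>v (v @\<^sub>v w) = (C2 *\<^sub>v v + E *\<^sub>v w) @\<^sub>v (0\<^sub>m r1 r2 *\<^sub>v v + C1 *\<^sub>v w)"
      unfolding C_def by (rule four_block_mat_mult_vec[OF C2 E _ C1 v w]) simp
    also have "0\<^sub>m r1 r2 *\<^sub>v v + C1 *\<^sub>v w = C1 *\<^sub>v w"
    proof -
      have "0\<^sub>m r1 r2 *\<^sub>v v = 0\<^sub>v r1" using v by (intro eq_vecI) auto
      thus ?thesis using C1 w by simp
    qed
    finally show ?thesis .
  qed
  have q: "qrep m A W U (r2 + r1) B C" unfolding qrep_def
  proof (intro conjI ballI impI)
    show "B \<in> carrier_mat m (r2 + r1)" "C \<in> carrier_mat (r2 + r1) (r2 + r1)" by (rule Bc, rule Cc)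
  next
    fix a :: "'a vec" assume a: "a \<in> carrier_vec (r2 + r1)"
    define a2 where "a2 = vec r2 (\<lambda>i. a $ i)"
    define a1 where "a1 = vec r1 (\<lambda>i. a $ (r2 + i))"
    have a2c: "a2 \<in> carrier_vec r2" and a1c: "a1 \<in> carrier_vec r1" by (simp_all add: a2_def a1_def)
    have aeq: "a = a2 @\<^sub>v a1" unfolding a2_def a1_def by (rule vec_split_app[OF a])
    have Ba: "B *\<^sub>v a = B2 *\<^sub>v a2 + B1 *\<^sub>v a1" unfolding aeq by (rule Bapp[OF a2c a1c])
    have x2: "B2 *\<^sub>v a2 \<in> X" using B2X a2c by simp
    show "B *\<^sub>v a \<in> W" unfolding Ba
      using subspD(3)[OF Wsp, of "B2 *\<^sub>v a2" "B1 *\<^sub>v a1"] x2 XW B1W a1c by auto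
  next
    fix a :: "'a vec" assume a: "a \<in> carrier_vec (r2 + r1)"
    define a2 where "a2 = vec r2 (\<lambda>i. a $ i)"
    define a1 where "a1 = vec r1 (\<lambda>i. a $ (r2 + i))"
    have a2c: "a2 \<in> carrier_vec r2" and a1c: "a1 \<in> carrier_vec r1" by (simp_all add: a2_def a1_def)
    have aeq: "a = a2 @\<^sub>v a1" unfolding a2_def a1_def by (rule vec_split_app[OF a])
    have Ba: "B *\<^sub>v a = B2 *\<^sub>v a2 + B1 *\<^sub>v a1" unfolding aeq by (rule Bapp[OF a2c a1c])
    have c2: "C2 *\<^sub>v a2 + E *\<^sub>v a1 \<in> carrier_vec r2" "C1 *\<^sub>v a1 \<in> carrier_vec r1" using C2 E C1 a2c a1c by auto
    have BCa: "B *\<^sub>v (C *\<^sub>v a) = B2 *\<^sub>v (C2 *\<^sub>v a2) + B2 *\<^sub>v (E *\<^sub>v a1) + B1 *\<^sub>v (C1 *\<^sub>v a1)"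
    proof -
      have "B *\<^sub>v (C *\<^sub>v a) = B2 *\<^sub>v (C2 *\<^sub>v a2 + E *\<^sub>v a1) + B1 *\<^sub>v (C1 *\<^sub>v a1)"
        unfolding aeq Capp[OF a2c a1c] by (rule Bapp[OF c2])
      also have "B2 *\<^sub>v (C2 *\<^sub>v a2 + E *\<^sub>v a1) = B2 *\<^sub>v (C2 *\<^sub>v a2) + B2 *\<^sub>v (E *\<^sub>v a1)"
        by (rule mult_add_distrib_mat_vec[OF B2]) (use C2 E a2c a1c in auto)
      finally show ?thesis .
    qed
    have ABa: "A *\<^sub>v (B *\<^sub>v a) = A *\<^sub>v (B2 *\<^sub>v a2) + A *\<^sub>v (B1 *\<^sub>v a1)"
      unfolding Ba by (rule mult_add_distrib_mat_vec[OF A]) (use B2 B1 a2c a1c in auto)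
    have t1: "A *\<^sub>v (B2 *\<^sub>v a2) - B2 *\<^sub>v (C2 *\<^sub>v a2) \<in> U" using BC2 a2c by simp
    have t2: "?G *\<^sub>v a1 - B2 *\<^sub>v (E *\<^sub>v a1) \<in> U" using GE a1c by simp
    have "A *\<^sub>v (B *\<^sub>v a) - B *\<^sub>v (C *\<^sub>v a) =
        (A *\<^sub>v (B2 *\<^sub>v a2) - B2 *\<^sub>v (C2 *\<^sub>v a2)) + (?G *\<^sub>v a1 - B2 *\<^sub>v (E *\<^sub>v a1))"
      unfolding ABa BCa Gv[OF a1c]
      by (rule eq_vecI) (use A B1 B2 C1 C2 E a1c a2c in auto)
    thus "A *\<^sub>v (B *\<^sub>v a) - B *\<^sub>v (C *\<^sub>v a) \<in> U" using subspD(3)[OF Usp t1 t2] by simp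
  next
    fix w assume w: "w \<in> W"
    obtain a1 where a1c: "a1 \<in> carrier_vec r1" and wx: "w - B1 *\<^sub>v a1 \<in> X" using sp1 w by blast
    obtain a2 where a2c: "a2 \<in> carrier_vec r2" and wu: "(w - B1 *\<^sub>v a1) - B2 *\<^sub>v a2 \<in> U" using sp2 wx by blast
    have wc: "w \<in> carrier_vec m" using w subspD(1)[OF Wsp] by auto
    have "w - B *\<^sub>v (a2 @\<^sub>v a1) = (w - B1 *\<^sub>v a1) - B2 *\<^sub>v a2"
      unfolding Bapp[OF a2c a1c] by (rule eq_vecI) (use wc B1 B2 a1c a2c in auto)
    moreover have "a2 @\<^sub>v a1 \<in> carrier_vec (r2 + r1)" using a1c a2c by simp
    ultimately show "\<exists>a\<in>carrier_vec (r2 + r1). w - B *\<^sub>v a \<in> U" using wu by metis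
  next
    fix a :: "'a vec" assume a: "a \<in> carrier_vec (r2 + r1)" and inU: "B *\<^sub>v a \<in> U"
    define a2 where "a2 = vec r2 (\<lambda>i. a $ i)"
    define a1 where "a1 = vec r1 (\<lambda>i. a $ (r2 + i))"
    have a2c: "a2 \<in> carrier_vec r2" and a1c: "a1 \<in> carrier_vec r1" by (simp_all add: a2_def a1_def)
    have aeq: "a = a2 @\<^sub>v a1" unfolding a2_def a1_def by (rule vec_split_app[OF a])
    have Ba: "B *\<^sub>v a = B2 *\<^sub>v a2 + B1 *\<^sub>v a1" unfolding aeq by (rule Bapp[OF a2c a1c])
    have x2: "B2 *\<^sub>v a2 \<in> X" using B2X a2c by simp
    have "B1 *\<^sub>v a1 = B *\<^sub>v a - B2 *\<^sub>v a2" unfolding Ba by (rule eq_vecI) (use B1 B2 a1c a2c in auto)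
    hence "B1 *\<^sub>v a1 \<in> X" using subsp_minus[OF Xsp _ x2] inU UX by auto
    hence a10: "a1 = 0\<^sub>v r1" using in1 a1c by simp
    have "B *\<^sub>v a = B2 *\<^sub>v a2" unfolding Ba a10 using B1 B2 a2c by simp
    hence a20: "a2 = 0\<^sub>v r2" using in2 a2c inU by simp
    show "a = 0\<^sub>v (r2 + r1)" unfolding aeq a10 a20 by (rule eq_vecI) auto
  qed
  have "mat_trace C = mat_trace C2 + mat_trace C1"
  proof -
    have "mat_trace C = (\<Sum>i<r2+r1. C $$ (i,i))" using Cc by (simp add: mat_trace_def)
    also have "\<dots> = (\<Sum>i<r2. C $$ (i,i)) + (\<Sum>i<r1. C $$ (r2 + i, r2 + i))" by (rule sum_split_add)
    also have "(\<Sum>i<r2. C $$ (i,i)) = mat_trace C2" using C2 C1 E by (simp add: C_def mat_trace_def)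
    also have "(\<Sum>i<r1. C $$ (r2 + i, r2 + i)) = mat_trace C1" using C2 C1 E by (simp add: C_def mat_trace_def)
    finally show ?thesis .
  qed
  thus ?thesis using quot_trace_eq[OF g q] quot_trace_eq[OF g1 q1] quot_trace_eq[OF g2 q2] by simp
qed


lemma qt_transport:
  fixes A A' D :: "'a::field mat"
  assumes A: "A \<in> carrier_mat m m" and A': "A' \<in> carrier_mat m' m'" and D: "D \<in> carrier_mat m' m"
    and comm: "A' * D = D * A"
    and g: "good m A (carrier_vec m) {v \<in> carrier_vec m. D *\<^sub>v v = 0\<^sub>v m'}"
    and g': "good m' A' {D *\<^sub>v w | w. w \<in> carrier_vec m} {0\<^sub>v m'}"
  shows "quot_trace m A (carrier_vec m) {v \<in> carrier_vec m. D *\<^sub>v v = 0\<^sub>v m'} =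
         quot_trace m' A' {D *\<^sub>v w | w. w \<in> carrier_vec m} {0\<^sub>v m'}"
proof -
  let ?K = "{v \<in> carrier_vec m. D *\<^sub>v v = 0\<^sub>v m'}"
  obtain r B C where q: "qrep m A (carrier_vec m) ?K r B C" using qrep_exists[OF g] by blast
  have B: "B \<in> carrier_mat m r" and C: "C \<in> carrier_mat r r"
    and sp: "\<forall>w\<in>carrier_vec m. \<exists>a\<in>carrier_vec r. w - B *\<^sub>v a \<in> ?K"
    and inj: "\<forall>a\<in>carrier_vec r. B *\<^sub>v a \<in> ?K \<longrightarrow> a = 0\<^sub>v r"
    and BC: "\<forall>a\<in>carrier_vec r. A *\<^sub>v (B *\<^sub>v a) - B *\<^sub>v (C *\<^sub>v a) \<in> ?K"
    using q unfolding qrep_def by auto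
  have DB: "(D * B) *\<^sub>v a = D *\<^sub>v (B *\<^sub>v a)" if "a \<in> carrier_vec r" for a
    by (rule assoc_mult_mat_vec[OF D B that])
  have q': "qrep m' A' {D *\<^sub>v w | w. w \<in> carrier_vec m} {0\<^sub>v m'} r (D * B) C" unfolding qrep_def
  proof (intro conjI ballI impI)
    show "D * B \<in> carrier_mat m' r" using D B by simp
    show "C \<in> carrier_mat r r" by (rule C)
  next
    fix a :: "'a vec" assume a: "a \<in> carrier_vec r"
    show "(D * B) *\<^sub>v a \<in> {D *\<^sub>v w | w. w \<in> carrier_vec m}" using DB[OF a] B a by auto
  next
    fix w' assume "w' \<in> {D *\<^sub>v w | w. w \<in> carrier_vec m}"
    then obtain v where v: "v \<in> carrier_vec m" and w': "w' = D *\<^sub>v v" by blast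
    obtain a where a: "a \<in> carrier_vec r" and k: "v - B *\<^sub>v a \<in> ?K" using sp v by blast
    have "D *\<^sub>v (v - B *\<^sub>v a) = D *\<^sub>v v - D *\<^sub>v (B *\<^sub>v a)"
      by (rule mult_minus_distrib_mat_vec[OF D]) (use v B a in auto)
    hence "w' - (D * B) *\<^sub>v a = 0\<^sub>v m'" using k DB[OF a] w' by simp
    thus "\<exists>a\<in>carrier_vec r. w' - (D * B) *\<^sub>v a \<in> {0\<^sub>v m'}" using a by auto
  next
    fix a :: "'a vec" assume a: "a \<in> carrier_vec r" and z: "(D * B) *\<^sub>v a \<in> {0\<^sub>v m'}"
    have "B *\<^sub>v a \<in> ?K" using z DB[OF a] B a by auto
    thus "a = 0\<^sub>v r" using inj a by simp
  next
    fix a :: "'a vec" assume a: "a \<in> carrier_vec r"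
    have Ca: "C *\<^sub>v a \<in> carrier_vec r" using C a by simp
    have "A' *\<^sub>v ((D * B) *\<^sub>v a) - (D * B) *\<^sub>v (C *\<^sub>v a) = D *\<^sub>v (A *\<^sub>v (B *\<^sub>v a)) - D *\<^sub>v (B *\<^sub>v (C *\<^sub>v a))"
    proof -
      have "A' *\<^sub>v (D *\<^sub>v (B *\<^sub>v a)) = (A' * D) *\<^sub>v (B *\<^sub>v a)"
        by (rule assoc_mult_mat_vec[symmetric]) (use A' D B a in auto)
      also have "\<dots> = D *\<^sub>v (A *\<^sub>v (B *\<^sub>v a))" unfolding comm
        by (rule assoc_mult_mat_vec) (use A D B a in auto)
      finally show ?thesis using DB[OF a] DB[OF Ca] by simp
    qed
    also have "\<dots> = D *\<^sub>v (A *\<^sub>v (B *\<^sub>v a) - B *\<^sub>v (C *\<^sub>v a))"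
      by (rule mult_minus_distrib_mat_vec[symmetric, OF D]) (use A B C a in auto)
    also have "\<dots> = 0\<^sub>v m'" using BC a by auto
    finally show "A' *\<^sub>v ((D * B) *\<^sub>v a) - (D * B) *\<^sub>v (C *\<^sub>v a) \<in> {0\<^sub>v m'}" by simp
  qed
  show ?thesis using quot_trace_eq[OF g q] quot_trace_eq[OF g' q'] by simp
qed

lemma qt_full:
  fixes A :: "'a::field mat"
  assumes g: "good m A (carrier_vec m) {0\<^sub>v m}"
  shows "quot_trace m A (carrier_vec m) {0\<^sub>v m} = mat_trace A"
proof -
  have A: "A \<in> carrier_mat m m" using g unfolding good_def by auto
  have "qrep m A (carrier_vec m) {0\<^sub>v m} m (1\<^sub>m m) A" unfolding qrep_def
  proof (intro conjI ballI impI)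
    fix w :: "'a vec" assume w: "w \<in> carrier_vec m"
    show "\<exists>a\<in>carrier_vec m. w - 1\<^sub>m m *\<^sub>v a \<in> {0\<^sub>v m}" using w by (intro bexI[of _ w]) auto
  qed (use A in auto)
  thus ?thesis by (rule quot_trace_eq[OF g])
qed

lemma qt_same:
  fixes A :: "'a::field mat"
  assumes g: "good m A W W"
  shows "quot_trace m A W W = 0"
proof -
  have Wsp: "subsp m W" and A: "A \<in> carrier_mat m m" using g unfolding good_def by auto
  have z: "0\<^sub>m m 0 *\<^sub>v a = 0\<^sub>v m" if "a \<in> carrier_vec 0" for a :: "'a vec"
    using that by (intro eq_vecI) (auto simp: scalar_prod_def)
  have "qrep m A W W 0 (0\<^sub>m m 0) (0\<^sub>m 0 0)" unfolding qrep_def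
  proof (intro conjI ballI impI)
    fix a :: "'a vec" assume a: "a \<in> carrier_vec 0"
    show "0\<^sub>m m 0 *\<^sub>v a \<in> W" using z[OF a] subspD(2)[OF Wsp] by simp
    show "a = 0\<^sub>v 0" using a by auto
    have "0\<^sub>m 0 0 *\<^sub>v a \<in> carrier_vec 0" by (rule mult_mat_vec_carrier[OF zero_carrier_mat a])
    hence "A *\<^sub>v (0\<^sub>m m 0 *\<^sub>v a) - 0\<^sub>m m 0 *\<^sub>v (0\<^sub>m 0 0 *\<^sub>v a) = 0\<^sub>v m"
      using z[OF a] z[of "0\<^sub>m 0 0 *\<^sub>v a"] A by simp
    thus "A *\<^sub>v (0\<^sub>m m 0 *\<^sub>v a) - 0\<^sub>m m 0 *\<^sub>v (0\<^sub>m 0 0 *\<^sub>v a) \<in> W" using subspD(2)[OF Wsp] by simp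
  next
    fix w assume w: "w \<in> W"
    have "w - 0\<^sub>m m 0 *\<^sub>v 0\<^sub>v 0 = w" using z[of "0\<^sub>v 0"] w subspD(1)[OF Wsp] by auto
    thus "\<exists>a\<in>carrier_vec 0. w - 0\<^sub>m m 0 *\<^sub>v a \<in> W" using w by (intro bexI[of _ "0\<^sub>v 0"]) auto
  qed auto
  from quot_trace_eq[OF g this] show ?thesis by (simp add: mat_trace_def)
qed

lemma subsp_carrier: "subsp m (carrier_vec m :: 'a::field vec set)"
  unfolding subsp_def by auto

lemma subsp_zero: "subsp m {0\<^sub>v m :: 'a::field vec}"
  unfolding subsp_def by auto

lemma subsp_kernel:
  fixes D :: "'a::field mat"
  assumes D: "D \<in> carrier_mat m' m"
  shows "subsp m {v \<in> carrier_vec m. D *\<^sub>v v = 0\<^sub>v m'}"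
  unfolding subsp_def
proof (intro conjI ballI allI)
  fix x y assume x: "x \<in> {v \<in> carrier_vec m. D *\<^sub>v v = 0\<^sub>v m'}" and y: "y \<in> {v \<in> carrier_vec m. D *\<^sub>v v = 0\<^sub>v m'}"
  thus "x + y \<in> {v \<in> carrier_vec m. D *\<^sub>v v = 0\<^sub>v m'}" using mult_add_distrib_mat_vec[OF D] by auto
next
  fix c :: 'a and x assume x: "x \<in> {v \<in> carrier_vec m. D *\<^sub>v v = 0\<^sub>v m'}"
  thus "c \<cdot>\<^sub>v x \<in> {v \<in> carrier_vec m. D *\<^sub>v v = 0\<^sub>v m'}" using mult_mat_vec[OF D] by auto
qed (use D in auto)

lemma subsp_image:
  fixes D :: "'a::field mat"
  assumes D: "D \<in> carrier_mat m' m"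
  shows "subsp m' {D *\<^sub>v w | w. w \<in> carrier_vec m}"
  unfolding subsp_def
proof (intro conjI ballI allI)
  show "{D *\<^sub>v w | w. w \<in> carrier_vec m} \<subseteq> carrier_vec m'" using D by auto
  show "0\<^sub>v m' \<in> {D *\<^sub>v w | w. w \<in> carrier_vec m}" using D by (intro CollectI exI[of _ "0\<^sub>v m"]) auto
  fix x y assume x: "x \<in> {D *\<^sub>v w | w. w \<in> carrier_vec m}" and y: "y \<in> {D *\<^sub>v w | w. w \<in> carrier_vec m}"
  then obtain wx wy where "wx \<in> carrier_vec m" "wy \<in> carrier_vec m" "x = D *\<^sub>v wx" "y = D *\<^sub>v wy" by blast
  thus "x + y \<in> {D *\<^sub>v w | w. w \<in> carrier_vec m}" using mult_add_distrib_mat_vec[OF D]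
    by (intro CollectI exI[of _ "wx + wy"]) auto
next
  fix c :: 'a and x assume "x \<in> {D *\<^sub>v w | w. w \<in> carrier_vec m}"
  then obtain w where "w \<in> carrier_vec m" "x = D *\<^sub>v w" by blast
  thus "c \<cdot>\<^sub>v x \<in> {D *\<^sub>v w | w. w \<in> carrier_vec m}" using mult_mat_vec[OF D]
    by (intro CollectI exI[of _ "c \<cdot>\<^sub>v w"]) auto
qed


lemma zero_mat_vec: "w \<in> carrier_vec nc \<Longrightarrow> 0\<^sub>m nr nc *\<^sub>v w = (0\<^sub>v nr :: 'a::comm_ring_1 vec)"
  by (intro eq_vecI) auto

lemma degree_identity:
  fixes n :: "int \<Rightarrow> nat" and d \<phi> :: "int \<Rightarrow> 'k::field mat"
  assumes cx: "is_complex n d" and cm: "is_chain_map n d \<phi>"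
  shows "mat_trace (\<phi> i) = homology_trace n d \<phi> i
      + quot_trace (n i) (\<phi> i) (coboundaries n d i) {0\<^sub>v (n i)}
      + quot_trace (n (i + 1)) (\<phi> (i + 1)) (coboundaries n d (i + 1)) {0\<^sub>v (n (i + 1))}"
proof -
  have dc: "\<And>i. d i \<in> carrier_mat (n (i + 1)) (n i)" using cx unfolding is_complex_def by blast
  have dd: "\<And>i. d (i + 1) * d i = 0\<^sub>m (n (i + 2)) (n i)" using cx unfolding is_complex_def by blast
  have phic: "\<And>i. \<phi> i \<in> carrier_mat (n i) (n i)" using cm unfolding is_chain_map_def by blast
  have phid: "\<And>i. \<phi> (i + 1) * d i = d i * \<phi> i" using cm unfolding is_chain_map_def by blast
  have dc': "d (j - 1) \<in> carrier_mat (n j) (n (j - 1))" for j using dc[of "j - 1"] by simp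
  have cob: "coboundaries n d j = {d (j - 1) *\<^sub>v w | w. w \<in> carrier_vec (n (j - 1))}" for j
    by (simp add: coboundaries_def)
  have cob1: "coboundaries n d (j + 1) = {d j *\<^sub>v w | w. w \<in> carrier_vec (n j)}" for j
    by (simp add: coboundaries_def)
  have coc: "cocycles n d j = {v \<in> carrier_vec (n j). d j *\<^sub>v v = 0\<^sub>v (n (j + 1))}" for j
    by (simp add: cocycles_def)
  have spZ: "subsp (n j) (cocycles n d j)" for j unfolding coc by (rule subsp_kernel[OF dc])
  have spB: "subsp (n j) (coboundaries n d j)" for j unfolding cob by (rule subsp_image[OF dc'])
  have Zinv: "\<forall>v\<in>cocycles n d j. \<phi> j *\<^sub>v v \<in> cocycles n d j" for j
  proof
    fix v assume v: "v \<in> cocycles n d j"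
    hence vc: "v \<in> carrier_vec (n j)" and dv: "d j *\<^sub>v v = 0\<^sub>v (n (j + 1))" unfolding coc by auto
    have "d j *\<^sub>v (\<phi> j *\<^sub>v v) = (d j * \<phi> j) *\<^sub>v v" using assoc_mult_mat_vec[OF dc phic vc] by simp
    also have "\<dots> = (\<phi> (j + 1) * d j) *\<^sub>v v" using phid by simp
    also have "\<dots> = \<phi> (j + 1) *\<^sub>v (d j *\<^sub>v v)" by (rule assoc_mult_mat_vec[OF phic dc vc])
    also have "\<dots> = 0\<^sub>v (n (j + 1))" unfolding dv using phic by simp
    finally show "\<phi> j *\<^sub>v v \<in> cocycles n d j" unfolding coc using phic[of j] vc by simp
  qed
  have Binv: "\<forall>v\<in>coboundaries n d j. \<phi> j *\<^sub>v v \<in> coboundaries n d j" for j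
  proof
    fix v assume "v \<in> coboundaries n d j"
    then obtain w where w: "w \<in> carrier_vec (n (j - 1))" and v: "v = d (j - 1) *\<^sub>v w" unfolding cob by blast
    have "\<phi> j *\<^sub>v v = (\<phi> j * d (j - 1)) *\<^sub>v w" unfolding v using assoc_mult_mat_vec[OF phic dc' w] by simp
    also have "\<phi> j * d (j - 1) = d (j - 1) * \<phi> (j - 1)" using phid[of "j - 1"] by simp
    also have "(d (j - 1) * \<phi> (j - 1)) *\<^sub>v w = d (j - 1) *\<^sub>v (\<phi> (j - 1) *\<^sub>v w)"
      by (rule assoc_mult_mat_vec[OF dc' phic w])
    finally show "\<phi> j *\<^sub>v v \<in> coboundaries n d j" unfolding cob using phic[of "j - 1"] w by auto
  qed
  have Vinv: "\<forall>v\<in>carrier_vec (n j). \<phi> j *\<^sub>v v \<in> carrier_vec (n j)" for j using phic[of j] by auto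
  have Oinv: "\<forall>v\<in>{0\<^sub>v (n j)}. \<phi> j *\<^sub>v v \<in> {0\<^sub>v (n j)}" for j using phic[of j] by simp
  have ZV: "cocycles n d j \<subseteq> carrier_vec (n j)" for j unfolding coc by auto
  have BZ: "coboundaries n d j \<subseteq> cocycles n d j" for j
  proof
    fix v assume "v \<in> coboundaries n d j"
    then obtain w where w: "w \<in> carrier_vec (n (j - 1))" and v: "v = d (j - 1) *\<^sub>v w" unfolding cob by blast
    have "d j *\<^sub>v v = (d j * d (j - 1)) *\<^sub>v w" unfolding v using assoc_mult_mat_vec[OF dc dc' w] by simp
    also have "d j * d (j - 1) = 0\<^sub>m (n (j + 1)) (n (j - 1))"
    proof -
      have e: "j - 1 + 2 = j + 1" "j - 1 + 1 = j" by simp_all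
      show ?thesis using dd[of "j - 1"] unfolding e .
    qed
    finally have "d j *\<^sub>v v = 0\<^sub>v (n (j + 1))" using zero_mat_vec[OF w] by simp
    thus "v \<in> cocycles n d j" unfolding coc v using dc'[of j] w by simp
  qed
  have OB: "{0\<^sub>v (n j)} \<subseteq> coboundaries n d j" for j using subspD(2)[OF spB] by simp
  have gVZ: "good (n j) (\<phi> j) (carrier_vec (n j)) (cocycles n d j)" for j
    unfolding good_def using phic[of j] spZ[of j] subsp_carrier[of "n j"] ZV[of j] Vinv[of j] Zinv[of j] by auto
  have gZ0: "good (n j) (\<phi> j) (cocycles n d j) {0\<^sub>v (n j)}" for j
    unfolding good_def using phic[of j] spZ[of j] subsp_zero[of "n j"] OB[of j] BZ[of j] Zinv[of j] Oinv[of j] by auto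
  have gV0: "good (n j) (\<phi> j) (carrier_vec (n j)) {0\<^sub>v (n j)}" for j
    unfolding good_def using phic[of j] subsp_carrier[of "n j"] subsp_zero[of "n j"] Vinv[of j] Oinv[of j] by auto
  have gZB: "good (n j) (\<phi> j) (cocycles n d j) (coboundaries n d j)" for j
    unfolding good_def using phic[of j] spZ[of j] spB[of j] BZ[of j] Zinv[of j] Binv[of j] by auto
  have gB0: "good (n j) (\<phi> j) (coboundaries n d j) {0\<^sub>v (n j)}" for j
    unfolding good_def using phic[of j] spB[of j] subsp_zero[of "n j"] OB[of j] Binv[of j] Oinv[of j] by auto
  have "mat_trace (\<phi> i) = quot_trace (n i) (\<phi> i) (carrier_vec (n i)) {0\<^sub>v (n i)}"
    by (rule qt_full[OF gV0, symmetric])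
  also have "\<dots> = quot_trace (n i) (\<phi> i) (carrier_vec (n i)) (cocycles n d i)
      + quot_trace (n i) (\<phi> i) (cocycles n d i) {0\<^sub>v (n i)}"
    by (rule qt_add[OF gVZ gZ0 gV0])
  also have "quot_trace (n i) (\<phi> i) (cocycles n d i) {0\<^sub>v (n i)} =
      quot_trace (n i) (\<phi> i) (cocycles n d i) (coboundaries n d i)
      + quot_trace (n i) (\<phi> i) (coboundaries n d i) {0\<^sub>v (n i)}"
    by (rule qt_add[OF gZB gB0 gZ0])
  also have "quot_trace (n i) (\<phi> i) (carrier_vec (n i)) (cocycles n d i) =
      quot_trace (n (i + 1)) (\<phi> (i + 1)) (coboundaries n d (i + 1)) {0\<^sub>v (n (i + 1))}"
    unfolding coc[of i] cob1[of i]
    by (rule qt_transport[OF phic phic dc phid]) (use gVZ[of i] gB0[of "i + 1"] in \<open>simp_all add: coc cob1\<close>)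
  finally show ?thesis unfolding homology_trace_def by (simp add: algebra_simps)
qed

lemma stretch_sum_eq:
  fixes n :: "int \<Rightarrow> nat" and d \<phi> :: "int \<Rightarrow> 'k::field mat"
  assumes cx: "is_complex n d" and cm: "is_chain_map n d \<phi>" and st: "is_stretch n d M N"
  shows "(\<Sum>i\<in>{M..N}. (-1) powi i * mat_trace (\<phi> i)) = (\<Sum>i\<in>{M..N}. (-1) powi i * homology_trace n d \<phi> i)"
proof -
  have phic: "\<And>i. \<phi> i \<in> carrier_mat (n i) (n i)" using cm unfolding is_chain_map_def by blast
  define \<beta> where "\<beta> i = quot_trace (n i) (\<phi> i) (coboundaries n d i) {0\<^sub>v (n i)}" for i
  have MN: "M \<le> N" using st unfolding is_stretch_def by simp
  have zero_cob: "\<beta> j = 0" if dz: "d (j - 1) = 0\<^sub>m (n j) (n (j - 1))" for j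
  proof -
    have "coboundaries n d j = {0\<^sub>v (n j)}"
      unfolding coboundaries_def dz by (auto intro!: exI[of _ "0\<^sub>v (n (j - 1))"])
    moreover have "good (n j) (\<phi> j) {0\<^sub>v (n j)} {0\<^sub>v (n j)}"
      unfolding good_def using phic subsp_zero by auto
    ultimately show ?thesis unfolding \<beta>_def using qt_same by metis
  qed
  have bM: "\<beta> M = 0" by (rule zero_cob) (use stretch_ends(1)[OF st] in simp)
  have bN: "\<beta> (N + 1) = 0" by (rule zero_cob) (use stretch_ends(2)[OF st] in simp)
  have "(\<Sum>i\<in>{M..N}. (-1) powi i * mat_trace (\<phi> i)) =
      (\<Sum>i\<in>{M..N}. (-1) powi i * homology_trace n d \<phi> i + (-1) powi i * (\<beta> (i - 1 + 1) + \<beta> (i + 1)))"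
    using degree_identity[OF cx cm] unfolding \<beta>_def by (intro sum.cong) (simp_all add: algebra_simps)
  also have "\<dots> = (\<Sum>i\<in>{M..N}. (-1) powi i * homology_trace n d \<phi> i) +
      (\<Sum>i\<in>{M..N}. (-1) powi i * (\<beta> (i - 1 + 1) + \<beta> (i + 1)))" by (rule sum.distrib)
  also have "(\<Sum>i\<in>{M..N}. (-1) powi i * (\<beta> (i - 1 + 1) + \<beta> (i + 1))) =
      (-1) powi M * \<beta> (M - 1 + 1) + (-1) powi N * \<beta> (N + 1)"
    by (rule telescope[OF MN, of "\<lambda>i. \<beta> (i + 1)"])
  also have "\<dots> = 0" using bM bN by simp
  finally show ?thesis by simp
qed

theorem theorem4:
  fixes n :: "int \<Rightarrow> nat" and d \<phi> :: "int \<Rightarrow> 'k::field mat"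
  assumes "is_complex n d"
    and "is_chain_map n d \<phi>"
  shows "((\<exists>\<psi>. is_chain_map n d \<psi> \<and> pointwise_commutator n \<psi> \<and> chain_homotopic n d \<phi> \<psi>)
           \<longleftrightarrow> (\<forall>M N. is_stretch n d M N \<longrightarrow>
                   (\<Sum>i\<in>{M..N}. (-1) powi i * mat_trace (\<phi> i)) = 0))
       \<and> ((\<forall>M N. is_stretch n d M N \<longrightarrow>
                   (\<Sum>i\<in>{M..N}. (-1) powi i * mat_trace (\<phi> i)) = 0)
           \<longleftrightarrow> (\<forall>M N. is_stretch n d M N \<longrightarrow>
                   (\<Sum>i\<in>{M..N}. (-1) powi i * homology_trace n d \<phi> i) = 0))"
proof (intro conjI)
  show "(\<exists>\<psi>. is_chain_map n d \<psi> \<and> pointwise_commutator n \<psi> \<and> chain_homotopic n d \<phi> \<psi>)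
           \<longleftrightarrow> (\<forall>M N. is_stretch n d M N \<longrightarrow>
                   (\<Sum>i\<in>{M..N}. (-1) powi i * mat_trace (\<phi> i)) = 0)"
    using a_imp_b[OF assms] b_imp_a[OF assms] by blast
  show "(\<forall>M N. is_stretch n d M N \<longrightarrow>
                   (\<Sum>i\<in>{M..N}. (-1) powi i * mat_trace (\<phi> i)) = 0)
           \<longleftrightarrow> (\<forall>M N. is_stretch n d M N \<longrightarrow>
                   (\<Sum>i\<in>{M..N}. (-1) powi i * homology_trace n d \<phi> i) = 0)"
    using stretch_sum_eq[OF assms] by auto
qed


end
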